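(* Let $\Omega$ be a topological space, $X$ a locally convex topological vector space over $\mathbb{C}$ with defining family of seminorms $\mathfrak{A}$, $V \subset F(\Omega, \mathbb{R}_+)$, $A \subset C(\Omega, \mathbb{C})$ and $W \subset FV_{b}(\Omega, X)$, with $A$ a multiplier of $W$. Let $p \in \mathfrak{A}$, $v \in V$, $f \in F(\Omega, X)$. Suppose (i) $X$ is Hausdorff; (ii) $\overline{(vf)(\Omega)}$ is compact and $vf$ is continuous on $\mathrm{supp}\, v$; (iii) $A$ $\beta$-separates disjoint Lebesgue sets of $vf$ in $\mathrm{supp}\, v$. Then $d_{v, p, \Omega}(f, W) = 0$ if and only if for each $\varepsilon > 0$ and $y \in X$ there is $g \in W$ such that for all $x\in\Omega$: if $p(v(x)f(x) - y) < \varepsilon$ then $p(v(x)g(x) - y) < 2\varepsilon$.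
   Context: $vf(x)=v(x)f(x)$; $\mathrm{supp}\,v$ is the closure of $\{v\neq0\}$. $FV_b(\Omega,X)=\{f:\sup_x v(x)q(f(x))<\infty\ \forall v\in V, q\in\mathfrak{A}\}$. $d_{v,p,\Omega}(f,W)=\inf_{g\in W}\sup_{x\in\Omega}v(x)p(f(x)-g(x))$. $\varphi\in F(\Omega,\mathbb{C})$ is a multiplier of $W$ if $\varphi f+(1-\varphi)g\in W$ for all $f,g\in W$; $A$ is a multiplier if each element is. $X^*$: continuous linear functionals $X\to\mathbb{C}$. A zero-set is $h^{-1}(0)$ with $h\in C(\Omega,\mathbb{R})$; a $z$-filter is a nonempty family $\mathcal{F}$ of zero-sets with $\emptyset\notin\mathcal{F}$, closed under finite intersections and under passing to larger zero-sets. $\mathcal{F}$ is $(A,v)$-antisymmetric if every $F\in\mathcal{F}$ meets $\mathrm{supp}\,v$ and, for each $\phi\in A$ with $\bigcap_{F\in\mathcal{F}}\overline{\phi(F\cap\mathrm{supp}\,v)}\subset[0,1]$ (closures in $\mathbb{C}\cup\{\infty\}$), this intersection is a single point. For $h\in F(\Omega,X)$, "$A$ $\beta$-separates disjoint Lebesgue sets of $h$ in $\mathrm{supp}\,v$" means: for any $(A,v)$-antisymmetric $z$-filter $\mathcal{F}$, any $e^*\in X^*$ and reals $a<b$, there is $F\in\mathcal{F}$ with $F\cap L_a=\emptyset$ or $F\cap L^b=\emptyset$, where $L_a=\{x\in\mathrm{supp}\,v:\Re e^*(h(x))\le a\}$, $L^b=\{x\in\mathrm{supp}\,v:\Re e^*(h(x))\ge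 b\}$. *)

theory Defs
  imports "HOL-Analysis.Analysis"
begin

definition complex_vs :: "(complex \<Rightarrow> 'x::ab_group_add \<Rightarrow> 'x) \<Rightarrow> bool" where
  "complex_vs sc \<longleftrightarrow>
     (\<forall>a x y. sc a (x + y) = sc a x + sc a y) \<and>
     (\<forall>a b x. sc (a + b) x = sc a x + sc b x) \<and>
     (\<forall>a b x. sc a (sc b x) = sc (a * b) x) \<and>
     (\<forall>x. sc 1 x = x)"

definition seminorm_on :: "(complex \<Rightarrow> 'x::ab_group_add \<Rightarrow> 'x) \<Rightarrow> ('x \<Rightarrow> real) \<Rightarrow> bool" where
  "seminorm_on sc q \<longleftrightarrow>
     (\<forall>x y. q (x + y) \<le> q x + q y) \<and> (\<forall>c x. q (sc c x) = cmod c * q x)"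

definition lc_topology :: "('x::ab_group_add \<Rightarrow> real) set \<Rightarrow> 'x topology" where
  "lc_topology P = topology (\<lambda>U. \<forall>x\<in>U. \<exists>F e. finite F \<and> F \<subseteq> P \<and> e > 0 \<and>
        {y. \<forall>q\<in>F. q (y - x) < e} \<subseteq> U)"

definition dual_space :: "(complex \<Rightarrow> 'x::ab_group_add \<Rightarrow> 'x) \<Rightarrow> ('x \<Rightarrow> real) set \<Rightarrow> ('x \<Rightarrow> complex) set" where
  "dual_space sc P = {e. (\<forall>x y. e (x + y) = e x + e y) \<and> (\<forall>c x. e (sc c x) = c * e x) \<and>
                        continuous_map (lc_topology P) euclidean e}"

definition supp :: "('a::topological_space \<Rightarrow> real) \<Rightarrow> 'a set" where
  "supp v = closure {x. v x \<noteq> 0}"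

definition FVb :: "(complex \<Rightarrow> 'x::ab_group_add \<Rightarrow> 'x) \<Rightarrow> ('x \<Rightarrow> real) set \<Rightarrow> ('a \<Rightarrow> real) set \<Rightarrow> ('a \<Rightarrow> 'x) set" where
  "FVb sc P V = {f. \<forall>v\<in>V. \<forall>q\<in>P. bdd_above (range (\<lambda>x. v x * q (f x)))}"

definition dist_vp :: "(complex \<Rightarrow> 'x::ab_group_add \<Rightarrow> 'x) \<Rightarrow> ('a \<Rightarrow> real) \<Rightarrow> ('x \<Rightarrow> real) \<Rightarrow> ('a \<Rightarrow> 'x) \<Rightarrow> ('a \<Rightarrow> 'x) set \<Rightarrow> ereal" where
  "dist_vp sc v p f W = (INF g\<in>W. SUP x. ereal (v x * p (f x - g x)))"

definition is_multiplier :: "(complex \<Rightarrow> 'x::ab_group_add \<Rightarrow> 'x) \<Rightarrow> ('a \<Rightarrow> complex) \<Rightarrow> ('a \<Rightarrow> 'x) set \<Rightarrow> bool" where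
  "is_multiplier sc \<phi> W \<longleftrightarrow> (\<forall>f\<in>W. \<forall>g\<in>W. (\<lambda>x. sc (\<phi> x) (f x) + sc (1 - \<phi> x) (g x)) \<in> W)"

definition zero_set :: "'a::topological_space set \<Rightarrow> bool" where
  "zero_set Z \<longleftrightarrow> (\<exists>h::'a \<Rightarrow> real. continuous_on UNIV h \<and> Z = h -` {0})"

definition z_filter :: "'a::topological_space set set \<Rightarrow> bool" where
  "z_filter \<F> \<longleftrightarrow> \<F> \<noteq> {} \<and> (\<forall>F\<in>\<F>. zero_set F) \<and> {} \<notin> \<F> \<and>
     (\<forall>F\<in>\<F>. \<forall>G\<in>\<F>. F \<inter> G \<in> \<F>) \<and>
     (\<forall>F\<in>\<F>. \<forall>Z. zero_set Z \<and> F \<subseteq> Z \<longrightarrow> Z \<in> \<F>)"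

text \<open>Closure in the one-point compactification C \<union> {\<infinity>} of a set of complex numbers,
  with C \<union> {\<infinity>} represented as complex option (None = \<infinity>).\<close>
definition ext_closure :: "complex set \<Rightarrow> complex option set" where
  "ext_closure S = Some ` closure S \<union> (if bounded S then {} else {None})"

definition antisymmetric_zf :: "('a::topological_space \<Rightarrow> complex) set \<Rightarrow> ('a \<Rightarrow> real) \<Rightarrow> 'a set set \<Rightarrow> bool" where
  "antisymmetric_zf A v \<F> \<longleftrightarrow> z_filter \<F> \<and> (\<forall>F\<in>\<F>. F \<inter> supp v \<noteq> {}) \<and>
     (\<forall>\<phi>\<in>A. (\<Inter>F\<in>\<F>. ext_closure (\<phi> ` (F \<inter> supp v))) \<subseteq> Some ` {z. Im z = 0 \<and> 0 \<le> Re z \<and> Re z \<le> 1}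
        \<longrightarrow> (\<exists>w. (\<Inter>F\<in>\<F>. ext_closure (\<phi> ` (F \<inter> supp v))) = {w}))"

definition beta_separates :: "(complex \<Rightarrow> 'x::ab_group_add \<Rightarrow> 'x) \<Rightarrow> ('x \<Rightarrow> real) set \<Rightarrow>
    ('a::topological_space \<Rightarrow> complex) set \<Rightarrow> ('a \<Rightarrow> real) \<Rightarrow> ('a \<Rightarrow> 'x) \<Rightarrow> bool" where
  "beta_separates sc P A v h \<longleftrightarrow>
     (\<forall>\<F> e a b. antisymmetric_zf A v \<F> \<and> e \<in> dual_space sc P \<and> a < b \<longrightarrow>
        (\<exists>F\<in>\<F>. F \<inter> {x\<in>supp v. Re (e (h x)) \<le> a} = {} \<or> F \<inter> {x\<in>supp v. Re (e (h x)) \<ge> b} = {}))"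

end

theory Submission
  imports Defs
begin

lemma cvs_add: "complex_vs sc \<Longrightarrow> sc a (x + y) = sc a x + sc a y"
  unfolding complex_vs_def by blast
lemma cvs_addl: "complex_vs sc \<Longrightarrow> sc (a + b) x = sc a x + sc b x"
  unfolding complex_vs_def by blast
lemma cvs_assoc: "complex_vs sc \<Longrightarrow> sc a (sc b x) = sc (a * b) x"
  unfolding complex_vs_def by blast
lemma cvs_one: "complex_vs sc \<Longrightarrow> sc 1 x = x"
  unfolding complex_vs_def by blast
lemma cvs_zerol: assumes "complex_vs sc" shows "sc 0 x = 0"
proof -
  have "sc (0+0) x = sc 0 x + sc 0 x" using cvs_addl[OF assms] .
  then show ?thesis by simp
qed
lemma cvs_zeror: assumes "complex_vs sc" shows "sc a 0 = 0"
proof -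
  have "sc a (0+0) = sc a 0 + sc a 0" using cvs_add[OF assms] .
  then show ?thesis by simp
qed
lemma cvs_minusl: assumes "complex_vs sc" shows "sc (-a) x = - sc a x"
proof -
  have "sc (a + -a) x = sc a x + sc (-a) x" using cvs_addl[OF assms] .
  then show ?thesis using cvs_zerol[OF assms] by (simp add: eq_neg_iff_add_eq_0 add.commute)
qed
lemma cvs_minusr: assumes "complex_vs sc" shows "sc a (-x) = - sc a x"
proof -
  have "sc a (x + -x) = sc a x + sc a (-x)" using cvs_add[OF assms] .
  then show ?thesis using cvs_zeror[OF assms] by (simp add: eq_neg_iff_add_eq_0 add.commute)
qed
lemma cvs_diff: assumes "complex_vs sc" shows "sc a (x - y) = sc a x - sc a y"
  using cvs_add[OF assms, of a x "-y"] cvs_minusr[OF assms] by simp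
lemma cvs_diffl: assumes "complex_vs sc" shows "sc (a - b) x = sc a x - sc b x"
  using cvs_addl[OF assms, of a "-b" x] cvs_minusl[OF assms] by simp

lemma sn_tri: "seminorm_on sc q \<Longrightarrow> q (x + y) \<le> q x + q y"
  unfolding seminorm_on_def by blast
lemma sn_scale: "seminorm_on sc q \<Longrightarrow> q (sc c x) = cmod c * q x"
  unfolding seminorm_on_def by blast
lemma sn_zero: assumes "complex_vs sc" "seminorm_on sc q" shows "q 0 = 0"
  using sn_scale[OF assms(2), of 0 0] cvs_zerol[OF assms(1)] by simp
lemma sn_minus: assumes "complex_vs sc" "seminorm_on sc q" shows "q (- x) = q x"
  using sn_scale[OF assms(2), of "-1" x] cvs_minusl[OF assms(1), of 1 x] cvs_one[OF assms(1)] by simp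
lemma sn_nonneg: assumes "complex_vs sc" "seminorm_on sc q" shows "q x \<ge> 0"
proof -
  have "q (x + -x) \<le> q x + q (-x)" by (rule sn_tri[OF assms(2)])
  then show ?thesis using sn_zero[OF assms] sn_minus[OF assms] by simp
qed
lemma sn_commute: assumes "complex_vs sc" "seminorm_on sc q" shows "q (x - y) = q (y - x)"
  using sn_minus[OF assms, of "x - y"] by simp
lemma sn_tri_diff: assumes "seminorm_on sc q" shows "q (x - z) \<le> q (x - y) + q (y - z)"
  using sn_tri[OF assms, of "x - y" "y - z"] by simp
lemma sn_rev: assumes "seminorm_on sc q" shows "q x - q y \<le> q (x - y)"
  using sn_tri[OF assms, of "x - y" y] by simp
lemma sn_abs: assumes "complex_vs sc" "seminorm_on sc q" shows "\<bar>q x - q y\<bar> \<le> q (x - y)"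
  using sn_rev[OF assms(2), of x y] sn_rev[OF assms(2), of y x] sn_commute[OF assms, of x y] by simp

lemma lc_istop:
  fixes P :: "('a::ab_group_add \<Rightarrow> real) set"
  shows "istopology (\<lambda>U. \<forall>x\<in>U. \<exists>F e. finite F \<and> F \<subseteq> P \<and> e > 0 \<and>
        {y. \<forall>q\<in>F. q (y - x) < e} \<subseteq> U)"
  unfolding istopology_def
proof (intro conjI allI impI)
  fix S T :: "'a set"
  assume S: "\<forall>x\<in>S. \<exists>F e. finite F \<and> F \<subseteq> P \<and> e > 0 \<and> {y. \<forall>q\<in>F. q (y - x) < e} \<subseteq> S"
    and T: "\<forall>x\<in>T. \<exists>F e. finite F \<and> F \<subseteq> P \<and> e > 0 \<and> {y. \<forall>q\<in>F. q (y - x) < e} \<subseteq> T"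
  show "\<forall>x\<in>S \<inter> T. \<exists>F e. finite F \<and> F \<subseteq> P \<and> e > 0 \<and> {y. \<forall>q\<in>F. q (y - x) < e} \<subseteq> S \<inter> T"
  proof
    fix x assume x: "x \<in> S \<inter> T"
    have "\<exists>F e. finite F \<and> F \<subseteq> P \<and> e > 0 \<and> {y. \<forall>q\<in>F. q (y - x) < e} \<subseteq> S"
      using S x by blast
    then obtain F1 e1 where 1: "finite F1" "F1 \<subseteq> P" "e1 > 0" "{y. \<forall>q\<in>F1. q (y - x) < e1} \<subseteq> S"
      by blast
    have "\<exists>F e. finite F \<and> F \<subseteq> P \<and> e > 0 \<and> {y. \<forall>q\<in>F. q (y - x) < e} \<subseteq> T"
      using T x by blast
    then obtain F2 e2 where 2: "finite F2" "F2 \<subseteq> P" "e2 > 0" "{y. \<forall>q\<in>F2. q (y - x) < e2} \<subseteq> T"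
      by blast
    have sub: "{y. \<forall>q\<in>F1 \<union> F2. q (y - x) < min e1 e2} \<subseteq> S \<inter> T"
    proof
      fix y assume y: "y \<in> {y. \<forall>q\<in>F1 \<union> F2. q (y - x) < min e1 e2}"
      have "\<forall>q\<in>F1. q (y - x) < e1"
      proof
        fix q assume "q \<in> F1"
        then have "q (y - x) < min e1 e2" using y by blast
        then show "q (y - x) < e1" by simp
      qed
      then have "y \<in> S" using 1(4) by blast
      moreover have "\<forall>q\<in>F2. q (y - x) < e2" using y by auto
      then have "y \<in> T" using 2(4) by blast
      ultimately show "y \<in> S \<inter> T" by blast
    qed
    show "\<exists>F e. finite F \<and> F \<subseteq> P \<and> e > 0 \<and> {y. \<forall>q\<in>F. q (y - x) < e} \<subseteq> S \<inter> T"
      apply (rule exI[of _ "F1 \<union> F2"], rule exI[of _ "min e1 e2"])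
      using 1 2 sub by simp
  qed
next
  fix K :: "'a set set"
  assume assm: "\<forall>U\<in>K. \<forall>x\<in>U. \<exists>F e. finite F \<and> F \<subseteq> P \<and> e > 0 \<and> {y. \<forall>q\<in>F. q (y - x) < e} \<subseteq> U"
  show "\<forall>x\<in>\<Union>K. \<exists>F e. finite F \<and> F \<subseteq> P \<and> e > 0 \<and> {y. \<forall>q\<in>F. q (y - x) < e} \<subseteq> \<Union>K"
  proof
    fix x assume "x \<in> \<Union>K"
    then obtain U where U: "U \<in> K" "x \<in> U" by blast
    then have "\<exists>F e. finite F \<and> F \<subseteq> P \<and> e > 0 \<and> {y. \<forall>q\<in>F. q (y - x) < e} \<subseteq> U"
      using assm by blast
    then obtain F e where "finite F" "F \<subseteq> P" "e > 0" "{y. \<forall>q\<in>F. q (y - x) < e} \<subseteq> U" by blast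
    then show "\<exists>F e. finite F \<and> F \<subseteq> P \<and> e > 0 \<and> {y. \<forall>q\<in>F. q (y - x) < e} \<subseteq> \<Union>K"
      using U(1) by blast
  qed
qed

lemma openin_lc: "openin (lc_topology P) U \<longleftrightarrow> (\<forall>x\<in>U. \<exists>F e. finite F \<and> F \<subseteq> P \<and> e > 0 \<and>
        {y. \<forall>q\<in>F. q (y - x) < e} \<subseteq> U)"
  unfolding lc_topology_def using lc_istop[of P] by simp

lemma topspace_lc[simp]: "topspace (lc_topology P) = UNIV"
proof -
  have "\<exists>F e. finite F \<and> F \<subseteq> P \<and> e > 0 \<and> {y. \<forall>q\<in>F. q (y - x) < e} \<subseteq> UNIV" for x
  proof -
    have "finite {} \<and> {} \<subseteq> P \<and> (1::real) > 0 \<and> {y. \<forall>q\<in>{}. q (y - x) < (1::real)} \<subseteq> UNIV" by simp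
    then show ?thesis by blast
  qed
  then have "openin (lc_topology P) UNIV" unfolding openin_lc by blast
  then show ?thesis using openin_subset by blast
qed

lemma ball_openin:
  assumes "p \<in> P" "seminorm_on sc p"
  shows "openin (lc_topology P) {w. p (w - k) < e}"
  unfolding openin_lc
proof
  fix x assume x: "x \<in> {w. p (w - k) < e}"
  have sub: "{y. \<forall>q\<in>{p}. q (y - x) < e - p (x - k)} \<subseteq> {w. p (w - k) < e}"
  proof
    fix y assume "y \<in> {y. \<forall>q\<in>{p}. q (y - x) < e - p (x - k)}"
    then have "p (y - x) < e - p (x - k)" by simp
    then show "y \<in> {w. p (w - k) < e}" using sn_tri_diff[OF assms(2), of y k x] by simp
  qed
  have pos: "e - p (x - k) > 0" using x by simp
  have fin: "finite {p}" "{p} \<subseteq> P" using assms(1) by auto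
  show "\<exists>F d. finite F \<and> F \<subseteq> P \<and> d > 0 \<and> {y. \<forall>q\<in>F. q (y - x) < d} \<subseteq> {w. p (w - k) < e}"
    by (rule exI[of _ "{p}"], rule exI[of _ "e - p (x - k)"], intro conjI fin pos sub)
qed

lemma sn_cont:
  assumes "p \<in> P" "complex_vs sc" "seminorm_on sc p"
  shows "continuous_map (lc_topology P) euclidean p"
  unfolding continuous_map_def
proof (intro conjI allI impI)
  fix U :: "real set" assume "openin euclidean U"
  then have oU: "open U" by simp
  show "openin (lc_topology P) {x \<in> topspace (lc_topology P). p x \<in> U}"
    unfolding openin_lc
  proof
    fix x assume "x \<in> {x \<in> topspace (lc_topology P). p x \<in> U}"
    then have "p x \<in> U" by simp
    then obtain e where e: "e > 0" "ball (p x) e \<subseteq> U" using oU open_contains_ball by blast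
    have sub: "{y. \<forall>q\<in>{p}. q (y - x) < e} \<subseteq> {x \<in> topspace (lc_topology P). p x \<in> U}"
    proof
      fix y assume "y \<in> {y. \<forall>q\<in>{p}. q (y - x) < e}"
      then have "p (y - x) < e" by simp
      then have "dist (p y) (p x) < e" using sn_abs[OF assms(2,3), of y x] by (simp add: dist_real_def)
      then have "p y \<in> U" using e by (auto simp: dist_commute)
      then show "y \<in> {x \<in> topspace (lc_topology P). p x \<in> U}" by simp
    qed
    have fin: "finite {p}" "{p} \<subseteq> P" using assms(1) by auto
    show "\<exists>F d. finite F \<and> F \<subseteq> P \<and> d > 0 \<and> {y. \<forall>q\<in>F. q (y - x) < d} \<subseteq> {x \<in> topspace (lc_topology P). p x \<in> U}"
      by (rule exI[of _ "{p}"], rule exI[of _ "e"], intro conjI fin e(1) sub)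
  qed
qed auto

lemma hausdorff_sep:
  assumes "Hausdorff_space (lc_topology P)" "z \<noteq> k"
  shows "\<exists>q\<in>P. q (k - z) \<noteq> 0"
proof (rule ccontr)
  assume H: "\<not> (\<exists>q\<in>P. q (k - z) \<noteq> 0)"
  obtain U V where UV: "openin (lc_topology P) U" "openin (lc_topology P) V" "z \<in> U" "k \<in> V" "disjnt U V"
    using assms(1) assms(2) unfolding Hausdorff_space_def topspace_lc by blast
  have "\<exists>F e. finite F \<and> F \<subseteq> P \<and> e > 0 \<and> {y. \<forall>q\<in>F. q (y - z) < e} \<subseteq> U"
    using UV(1,3) unfolding openin_lc by (rule bspec)
  then obtain F e where FE: "F \<subseteq> P" "e > 0" "{y. \<forall>q\<in>F. q (y - z) < e} \<subseteq> U"
    by blast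
  have "\<forall>q\<in>F. q (k - z) < e"
  proof
    fix q assume "q \<in> F"
    then have "q \<in> P" using FE(1) by blast
    then have "q (k - z) = 0" using H by blast
    then show "q (k - z) < e" using FE(2) by simp
  qed
  then have "k \<in> U" using FE(3) by blast
  then show False using UV by (auto simp: disjnt_def)
qed

definition hbgood :: "(complex \<Rightarrow> 'x::ab_group_add \<Rightarrow> 'x) \<Rightarrow> ('x \<Rightarrow> real) \<Rightarrow> 'x \<Rightarrow> ('x \<times> real) set \<Rightarrow> bool" where
  "hbgood sc q x0 G \<longleftrightarrow> (\<forall>x a b. (x,a)\<in>G \<longrightarrow> (x,b)\<in>G \<longrightarrow> a = b) \<and> (x0, q x0) \<in> G \<and>
     (\<forall>x a y b. (x,a)\<in>G \<longrightarrow> (y,b)\<in>G \<longrightarrow> (x+y, a+b)\<in>G) \<and>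
     (\<forall>x a c. (x,a)\<in>G \<longrightarrow> (sc (complex_of_real c) x, c*a)\<in>G) \<and> (\<forall>x a. (x,a)\<in>G \<longrightarrow> a \<le> q x)"

lemma rs_addl: "complex_vs sc \<Longrightarrow> sc (complex_of_real (a + b)) x = sc (complex_of_real a) x + sc (complex_of_real b) x"
  using cvs_addl[of sc "complex_of_real a" "complex_of_real b" x] by simp
lemma rs_assoc: "complex_vs sc \<Longrightarrow> sc (complex_of_real a) (sc (complex_of_real b) x) = sc (complex_of_real (a * b)) x"
  using cvs_assoc[of sc "complex_of_real a" "complex_of_real b" x] by simp
lemma rs_one: "complex_vs sc \<Longrightarrow> sc (complex_of_real 1) x = x"
  using cvs_one[of sc x] by simp
lemma rs_zero: "complex_vs sc \<Longrightarrow> sc (complex_of_real 0) x = 0"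
  using cvs_zerol[of sc x] by simp
lemma rs_minus1: "complex_vs sc \<Longrightarrow> sc (complex_of_real (-1)) x = - x"
  using cvs_minusl[of sc 1 x] cvs_one[of sc x] by simp
lemma rs_norm: "seminorm_on sc q \<Longrightarrow> q (sc (complex_of_real c) x) = \<bar>c\<bar> * q x"
  using sn_scale[of sc q "complex_of_real c" x] by simp

lemma hb_init:
  fixes sc :: "complex \<Rightarrow> 'x::ab_group_add \<Rightarrow> 'x" and q :: "'x \<Rightarrow> real"
  assumes cvs: "complex_vs sc" and sn: "seminorm_on sc q" and x0: "q x0 > 0"
  shows "hbgood sc q x0 {(sc (complex_of_real c) x0, c * q x0) | c. True}"
  unfolding hbgood_def
proof (intro conjI allI impI)
  fix x a b
  assume "(x, a) \<in> {(sc (complex_of_real c) x0, c * q x0) |c. True}"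
    "(x, b) \<in> {(sc (complex_of_real c) x0, c * q x0) |c. True}"
  then obtain c c' where cc: "x = sc (complex_of_real c) x0" "a = c * q x0"
    "x = sc (complex_of_real c') x0" "b = c' * q x0" by blast
  have "sc (complex_of_real (c - c')) x0 = 0"
    using cc(1,3) cvs_diffl[OF cvs, of "complex_of_real c" "complex_of_real c'" x0] by simp
  then have "\<bar>c - c'\<bar> * q x0 = 0" using rs_norm[OF sn, of "c - c'" x0] sn_zero[OF cvs sn] by simp
  then have "c = c'" using x0 by simp
  then show "a = b" using cc by simp
next
  show "(x0, q x0) \<in> {(sc (complex_of_real c) x0, c * q x0) |c. True}"
    using rs_one[OF cvs, of x0] by (intro CollectI exI[of _ 1]) simp
next
  fix x a y b
  assume "(x, a) \<in> {(sc (complex_of_real c) x0, c * q x0) |c. True}"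
    "(y, b) \<in> {(sc (complex_of_real c) x0, c * q x0) |c. True}"
  then obtain c c' where cc: "x = sc (complex_of_real c) x0" "a = c * q x0"
    "y = sc (complex_of_real c') x0" "b = c' * q x0" by blast
  have "x + y = sc (complex_of_real (c + c')) x0" "a + b = (c + c') * q x0"
    using cc rs_addl[OF cvs, of c c' x0] by (auto simp: algebra_simps)
  then show "(x + y, a + b) \<in> {(sc (complex_of_real c) x0, c * q x0) |c. True}" by blast
next
  fix x a d
  assume "(x, a) \<in> {(sc (complex_of_real c) x0, c * q x0) |c. True}"
  then obtain c where cc: "x = sc (complex_of_real c) x0" "a = c * q x0" by blast
  have "sc (complex_of_real d) x = sc (complex_of_real (d * c)) x0" "d * a = (d * c) * q x0"
    using cc rs_assoc[OF cvs, of d c x0] by auto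
  then show "(sc (complex_of_real d) x, d * a) \<in> {(sc (complex_of_real c) x0, c * q x0) |c. True}" by blast
next
  fix x a
  assume "(x, a) \<in> {(sc (complex_of_real c) x0, c * q x0) |c. True}"
  then obtain c where cc: "x = sc (complex_of_real c) x0" "a = c * q x0" by blast
  have "c * q x0 \<le> \<bar>c\<bar> * q x0" using x0 by (simp add: mult_right_mono)
  then show "a \<le> q x" using cc rs_norm[OF sn, of c x0] by simp
qed

lemma hb_chain:
  assumes "C \<noteq> {}" "subset.chain {G. hbgood sc q x0 G} C"
  shows "hbgood sc q x0 (\<Union>C)"
proof -
  have CA: "\<And>G. G \<in> C \<Longrightarrow> hbgood sc q x0 G" and ch: "\<And>G H. G \<in> C \<Longrightarrow> H \<in> C \<Longrightarrow> G \<subseteq> H \<or> H \<subseteq> G"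
    using assms(2) unfolding subset_chain_def by blast+
  have two: "\<exists>G\<in>C. u \<in> G \<and> w \<in> G" if uw: "u \<in> \<Union>C" "w \<in> \<Union>C" for u w
  proof -
    obtain G H where "G \<in> C" "H \<in> C" "u \<in> G" "w \<in> H" using uw by blast
    then show ?thesis using ch[of G H] by blast
  qed
  obtain G0 where G0: "G0 \<in> C" using assms(1) by blast
  show ?thesis unfolding hbgood_def
  proof (intro conjI allI impI)
    fix x a b assume "(x, a) \<in> \<Union>C" "(x, b) \<in> \<Union>C"
    then obtain G where "G \<in> C" "(x,a) \<in> G" "(x,b) \<in> G" using two by blast
    then show "a = b" using CA unfolding hbgood_def by blast
  next
    show "(x0, q x0) \<in> \<Union>C" using G0 CA[OF G0] unfolding hbgood_def by blast
  next
    fix x a y b assume "(x, a) \<in> \<Union>C" "(y, b) \<in> \<Union>C"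
    then obtain G where "G \<in> C" "(x,a) \<in> G" "(y,b) \<in> G" using two by blast
    then have "(x + y, a + b) \<in> G" using CA unfolding hbgood_def by blast
    then show "(x + y, a + b) \<in> \<Union>C" using \<open>G \<in> C\<close> by blast
  next
    fix x a c assume "(x, a) \<in> \<Union>C"
    then obtain G where "G \<in> C" "(x,a) \<in> G" by blast
    then have "(sc (complex_of_real c) x, c * a) \<in> G" using CA unfolding hbgood_def by blast
    then show "(sc (complex_of_real c) x, c * a) \<in> \<Union>C" using \<open>G \<in> C\<close> by blast
  next
    fix x a assume "(x, a) \<in> \<Union>C"
    then obtain G where "G \<in> C" "(x,a) \<in> G" by blast
    then show "a \<le> q x" using CA unfolding hbgood_def by blast
  qed
qed

lemma aux_mul1: "(0::real) < c \<Longrightarrow> al \<le> Q - (1/c)*a \<Longrightarrow> c*al \<le> c*Q - a"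
proof -
  assume c: "0 < c" and h: "al \<le> Q - (1/c)*a"
  have "c * al \<le> c * (Q - (1/c)*a)" using mult_left_mono[OF h] c by simp
  also have "\<dots> = c*Q - a" using c by (simp add: algebra_simps)
  finally show ?thesis .
qed

lemma aux_mul2: "(0::real) < d \<Longrightarrow> (1/d)*a - Q \<le> al \<Longrightarrow> a - d*Q \<le> d*al"
proof -
  assume d: "0 < d" and h: "(1/d)*a - Q \<le> al"
  have "d * ((1/d)*a - Q) \<le> d * al" using mult_left_mono[OF h] d by simp
  also have "d * ((1/d)*a - Q) = a - d*Q" using d by (simp add: algebra_simps)
  finally show ?thesis by simp
qed

lemma hb_extend:
  fixes sc :: "complex \<Rightarrow> 'x::ab_group_add \<Rightarrow> 'x" and q :: "'x \<Rightarrow> real"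
  assumes cvs: "complex_vs sc" and sn: "seminorm_on sc q" and G: "hbgood sc q x0 G"
    and x1: "\<forall>a. (x1, a) \<notin> G"
  shows "\<exists>G'. hbgood sc q x0 G' \<and> G \<subseteq> G' \<and> G' \<noteq> G"
proof -
  let ?r = "\<lambda>c. sc (complex_of_real c)"
  have fnG: "\<And>x a b. (x,a)\<in>G \<Longrightarrow> (x,b)\<in>G \<Longrightarrow> a = b"
    and x0G: "(x0, q x0) \<in> G"
    and addG: "\<And>x a y b. (x,a)\<in>G \<Longrightarrow> (y,b)\<in>G \<Longrightarrow> (x+y, a+b)\<in>G"
    and scG: "\<And>x a c. (x,a)\<in>G \<Longrightarrow> (?r c x, c*a)\<in>G"
    and domG: "\<And>x a. (x,a)\<in>G \<Longrightarrow> a \<le> q x"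
    using G unfolding hbgood_def by blast+
  have zeroG: "(0, 0) \<in> G" using scG[OF x0G, of 0] rs_zero[OF cvs] by simp
  have negG: "(- x, - a) \<in> G" if "(x, a) \<in> G" for x a
    using scG[OF that, of "-1"] rs_minus1[OF cvs] by simp
  define S where "S = {a - q (y - x1) | y a. (y, a) \<in> G}"
  have key: "a - q (y - x1) \<le> q (y' + x1) - b" if "(y,a) \<in> G" "(y',b) \<in> G" for y a y' b
  proof -
    have "a + b \<le> q (y + y')" using domG[OF addG[OF that]] .
    also have "y + y' = (y - x1) + (y' + x1)" by (simp add: algebra_simps)
    also have "q \<dots> \<le> q (y - x1) + q (y' + x1)" by (rule sn_tri[OF sn])
    finally show ?thesis by simp
  qed
  have Sne: "S \<noteq> {}" using x0G unfolding S_def by blast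
  have Sbdd: "bdd_above S" unfolding S_def bdd_above_def
    using key[OF _ x0G] by blast
  define \<alpha> where "\<alpha> = Sup S"
  have up: "a - q (y - x1) \<le> \<alpha>" if "(y, a) \<in> G" for y a
    unfolding \<alpha>_def using that Sbdd by (intro cSup_upper) (auto simp: S_def)
  have lo: "\<alpha> \<le> q (y + x1) - b" if "(y, b) \<in> G" for y b
    unfolding \<alpha>_def using Sne key[OF _ that] by (intro cSup_least) (auto simp: S_def)
  define G' where "G' = {(y + ?r c x1, a + c * \<alpha>) | y a c. (y, a) \<in> G}"
  have inG': "(y + ?r c x1, a + c * \<alpha>) \<in> G'" if "(y, a) \<in> G" for y a c
    unfolding G'_def using that by blast
  have sub: "G \<subseteq> G'"
  proof
    fix z assume "z \<in> G"
    then obtain y a where z: "z = (y, a)" "(y, a) \<in> G" by (cases z) auto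
    show "z \<in> G'" using inG'[OF z(2), of 0] rs_zero[OF cvs] z(1) by simp
  qed
  have x1G': "(x1, \<alpha>) \<in> G'" using inG'[OF zeroG, of 1] rs_one[OF cvs] by simp
  have neq: "G' \<noteq> G" using x1G' x1 by blast
  have good: "hbgood sc q x0 G'"
    unfolding hbgood_def
  proof (intro conjI allI impI)
    fix x a b assume xa: "(x, a) \<in> G'" and xb: "(x, b) \<in> G'"
    from xa obtain y1 a1 c1 where 1: "x = y1 + ?r c1 x1" "a = a1 + c1 * \<alpha>" "(y1, a1) \<in> G"
      unfolding G'_def by blast
    from xb obtain y2 a2 c2 where 2: "x = y2 + ?r c2 x1" "b = a2 + c2 * \<alpha>" "(y2, a2) \<in> G"
      unfolding G'_def by blast
    have h: "y1 + ?r c1 x1 = y2 + ?r c2 x1" using 1(1) 2(1) by simp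
    have "?r (c1 - c2) x1 = ?r c1 x1 - ?r c2 x1"
      using cvs_diffl[OF cvs, of "complex_of_real c1" "complex_of_real c2" x1] by simp
    also have "\<dots> = (y1 + ?r c1 x1) - (y1 + ?r c2 x1)" by (simp add: algebra_simps)
    also have "\<dots> = (y2 + ?r c2 x1) - (y1 + ?r c2 x1)" using h by simp
    also have "\<dots> = y2 - y1" by (simp add: algebra_simps)
    finally have eq: "?r (c1 - c2) x1 = y2 - y1" .
    have c: "c1 = c2"
    proof (rule ccontr)
      assume "c1 \<noteq> c2"
      have "(y2 + - y1, a2 + - a1) \<in> G" using addG[OF 2(3) negG[OF 1(3)]] .
      then have "(?r (1 / (c1 - c2)) (y2 + - y1), (1 / (c1 - c2)) * (a2 + - a1)) \<in> G"
        by (rule scG)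
      moreover have "?r (1 / (c1 - c2)) (y2 + - y1) = x1"
        using eq[symmetric] rs_assoc[OF cvs, of "1 / (c1 - c2)" "c1 - c2" x1] \<open>c1 \<noteq> c2\<close> rs_one[OF cvs, of x1]
        by simp
      ultimately show False using x1 by metis
    qed
    then have "y1 = y2" using 1(1) 2(1) by simp
    then have "a1 = a2" using fnG 1(3) 2(3) by blast
    then show "a = b" using 1 2 c by simp
  next
    show "(x0, q x0) \<in> G'" using sub x0G by blast
  next
    fix x a y b assume xa: "(x, a) \<in> G'" and yb: "(y, b) \<in> G'"
    from xa obtain y1 a1 c1 where 1: "x = y1 + ?r c1 x1" "a = a1 + c1 * \<alpha>" "(y1, a1) \<in> G"
      unfolding G'_def by blast
    from yb obtain y2 a2 c2 where 2: "y = y2 + ?r c2 x1" "b = a2 + c2 * \<alpha>" "(y2, a2) \<in> G"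
      unfolding G'_def by blast
    have e1: "x + y = (y1 + y2) + ?r (c1 + c2) x1" using 1 2 rs_addl[OF cvs, of c1 c2 x1] by (simp add: algebra_simps)
    have e2: "a + b = (a1 + a2) + (c1 + c2) * \<alpha>"
      using 1 2 by (simp add: algebra_simps)
    show "(x + y, a + b) \<in> G'" unfolding e1 e2 by (rule inG'[OF addG[OF 1(3) 2(3)]])
  next
    fix x a d assume xa: "(x, a) \<in> G'"
    from xa obtain y1 a1 c1 where 1: "x = y1 + ?r c1 x1" "a = a1 + c1 * \<alpha>" "(y1, a1) \<in> G"
      unfolding G'_def by blast
    have e1: "?r d x = ?r d y1 + ?r (d * c1) x1"
      using 1 cvs_add[OF cvs] rs_assoc[OF cvs, of d c1 x1] by simp
    have e2: "d * a = d * a1 + (d * c1) * \<alpha>" using 1 by (simp add: algebra_simps)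
    show "(?r d x, d * a) \<in> G'" unfolding e1 e2 by (rule inG'[OF scG[OF 1(3)]])
  next
    fix x a assume xa: "(x, a) \<in> G'"
    from xa obtain y a1 c where 1: "x = y + ?r c x1" "a = a1 + c * \<alpha>" "(y, a1) \<in> G"
      unfolding G'_def by blast
    consider "c = 0" | "c > 0" | "c < 0" by linarith
    then show "a \<le> q x"
    proof cases
      case 1
      then show ?thesis using \<open>x = _\<close> \<open>a = _\<close> domG[OF \<open>(y, a1) \<in> G\<close>] rs_zero[OF cvs] by simp
    next
      case 2
      have m: "(?r (1 / c) y, (1 / c) * a1) \<in> G" using scG[OF 1(3)] .
      have "\<alpha> \<le> q (?r (1 / c) y + x1) - (1 / c) * a1" using lo[OF m] .
      then have "c * \<alpha> \<le> c * q (?r (1 / c) y + x1) - a1" using aux_mul1[OF 2] by blast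
      also have "c * q (?r (1 / c) y + x1) = q (?r c (?r (1 / c) y + x1))"
        using rs_norm[OF sn] 2 by simp
      also have "?r c (?r (1 / c) y + x1) = y + ?r c x1"
        using cvs_add[OF cvs] rs_assoc[OF cvs, of c "1/c" y] rs_one[OF cvs, of y] 2 by simp
      finally show ?thesis using 1 by simp
    next
      case 3
      define d where "d = - c"
      have d: "d > 0" using 3 d_def by simp
      have m: "(?r (1 / d) y, (1 / d) * a1) \<in> G" using scG[OF 1(3)] .
      have "(1 / d) * a1 - q (?r (1 / d) y - x1) \<le> \<alpha>" using up[OF m] .
      then have "a1 - d * q (?r (1 / d) y - x1) \<le> d * \<alpha>" using aux_mul2[OF d] by blast
      also have "d * q (?r (1 / d) y - x1) = q (?r d (?r (1 / d) y - x1))"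
        using rs_norm[OF sn] d by simp
      also have "?r d (?r (1 / d) y - x1) = y + ?r c x1"
      proof -
        have "?r d (?r (1 / d) y - x1) = ?r d (?r (1 / d) y) - ?r d x1" by (rule cvs_diff[OF cvs])
        also have "?r d (?r (1 / d) y) = y" using rs_assoc[OF cvs, of d "1/d" y] rs_one[OF cvs, of y] d by simp
        also have "?r d x1 = - ?r c x1" using d_def cvs_minusl[OF cvs, of "complex_of_real c" x1] by simp
        finally show ?thesis by simp
      qed
      finally show ?thesis using 1 d_def by (simp add: algebra_simps)
    qed
  qed
  show ?thesis using good sub neq by blast
qed

lemma hb_real:
  fixes sc :: "complex \<Rightarrow> 'x::ab_group_add \<Rightarrow> 'x" and q :: "'x \<Rightarrow> real"
  assumes cvs: "complex_vs sc" and sn: "seminorm_on sc q" and x0: "q x0 > 0"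
  shows "\<exists>l. (\<forall>x y. l (x + y) = l x + l y) \<and> (\<forall>c x. l (sc (complex_of_real c) x) = c * l x) \<and>
             (\<forall>x. l x \<le> q x) \<and> l x0 = q x0"
proof -
  have ne: "{G. hbgood sc q x0 G} \<noteq> {}" using hb_init[OF cvs sn x0] by blast
  obtain M where M: "M \<in> {G. hbgood sc q x0 G}"
    and max: "\<forall>X\<in>{G. hbgood sc q x0 G}. M \<subseteq> X \<longrightarrow> X = M"
    using subset_Zorn_nonempty[OF ne] hb_chain by (metis (no_types, lifting) mem_Collect_eq)
  have gM: "hbgood sc q x0 M" using M by simp
  have fnM: "\<And>x a b. (x,a)\<in>M \<Longrightarrow> (x,b)\<in>M \<Longrightarrow> a = b"
    and x0M: "(x0, q x0) \<in> M"
    and addM: "\<And>x a y b. (x,a)\<in>M \<Longrightarrow> (y,b)\<in>M \<Longrightarrow> (x+y, a+b)\<in>M"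
    and scM: "\<And>x a c. (x,a)\<in>M \<Longrightarrow> (sc (complex_of_real c) x, c*a)\<in>M"
    and domM: "\<And>x a. (x,a)\<in>M \<Longrightarrow> a \<le> q x"
    using gM unfolding hbgood_def by blast+
  have tot: "\<exists>a. (x, a) \<in> M" for x
  proof (rule ccontr)
    assume "\<not> (\<exists>a. (x, a) \<in> M)"
    then obtain G' where "hbgood sc q x0 G'" "M \<subseteq> G'" "G' \<noteq> M"
      using hb_extend[OF cvs sn gM, of x] by blast
    then show False using max by blast
  qed
  define l where "l x = (THE a. (x, a) \<in> M)" for x
  have lM: "(x, l x) \<in> M" for x
  proof -
    obtain a where a: "(x, a) \<in> M" using tot by blast
    have "l x = a" unfolding l_def using a fnM by blast
    then show ?thesis using a by simp
  qed
  have leq: "l x = a" if "(x, a) \<in> M" for x a using fnM[OF lM that] .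
  show ?thesis
  proof (intro exI conjI allI)
    fix x y show "l (x + y) = l x + l y" using leq[OF addM[OF lM lM]] .
  next
    fix c x show "l (sc (complex_of_real c) x) = c * l x" using leq[OF scM[OF lM]] .
  next
    fix x show "l x \<le> q x" using domM[OF lM] .
  next
    show "l x0 = q x0" using leq[OF x0M] .
  qed
qed

lemma dual_exists:
  fixes sc :: "complex \<Rightarrow> 'x::ab_group_add \<Rightarrow> 'x" and q :: "'x \<Rightarrow> real" and P :: "('x \<Rightarrow> real) set"
  assumes cvs: "complex_vs sc" and sn: "seminorm_on sc q" and qP: "q \<in> P" and x0: "q x0 > 0"
  shows "\<exists>e\<in>dual_space sc P. Re (e x0) > 0"
proof -
  obtain l where ladd: "\<And>x y. l (x + y) = l x + l y"
    and lsc: "\<And>c x. l (sc (complex_of_real c) x) = c * l x"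
    and lq: "\<And>x. l x \<le> q x" and lx0: "l x0 = q x0"
    using hb_real[OF cvs sn x0] by blast
  have lneg: "l (- x) = - l x" for x
    using lsc[of "-1" x] rs_minus1[OF cvs, of x] by simp
  have labs: "\<bar>l x\<bar> \<le> q x" for x
    using lq[of x] lq[of "-x"] lneg[of x] sn_minus[OF cvs sn, of x] by simp
  define e where "e x = Complex (l x) (- l (sc \<i> x))" for x
  have eadd: "e (x + y) = e x + e y" for x y
    unfolding e_def using ladd cvs_add[OF cvs] by (simp add: complex_eq_iff)
  have dec: "sc c x = sc (complex_of_real (Re c)) x + sc (complex_of_real (Im c)) (sc \<i> x)" for c x
  proof -
    have "c = complex_of_real (Re c) + complex_of_real (Im c) * \<i>" by (simp add: complex_eq_iff)
    then have "sc c x = sc (complex_of_real (Re c) + complex_of_real (Im c) * \<i>) x" by simp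
    also have "\<dots> = sc (complex_of_real (Re c)) x + sc (complex_of_real (Im c)) (sc \<i> x)"
      using cvs_addl[OF cvs] cvs_assoc[OF cvs] by simp
    finally show ?thesis .
  qed
  have lc: "l (sc c x) = Re c * l x + Im c * l (sc \<i> x)" for c x
    using dec[of c x] ladd lsc by simp
  have esc: "e (sc c x) = c * e x" for c x
  proof -
    have "sc \<i> (sc c x) = sc (\<i> * c) x" using cvs_assoc[OF cvs] by simp
    then have "l (sc \<i> (sc c x)) = - Im c * l x + Re c * l (sc \<i> x)" using lc[of "\<i> * c" x] by simp
    then show ?thesis unfolding e_def using lc[of c x] by (simp add: complex_eq_iff algebra_simps)
  qed
  have ebound: "cmod (e x) \<le> 2 * q x" for x
  proof -
    have "cmod (e x) \<le> \<bar>Re (e x)\<bar> + \<bar>Im (e x)\<bar>" by (rule cmod_le)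
    also have "\<dots> = \<bar>l x\<bar> + \<bar>l (sc \<i> x)\<bar>" unfolding e_def by simp
    also have "\<dots> \<le> q x + q (sc \<i> x)" using labs by (intro add_mono) auto
    also have "q (sc \<i> x) = q x" using sn_scale[OF sn] by simp
    finally show ?thesis by simp
  qed
  have ediff: "e y - e x = e (y - x)" for x y
    using eadd[of "y - x" x] by simp
  have econt: "continuous_map (lc_topology P) euclidean e"
    unfolding continuous_map_def
  proof (intro conjI allI impI)
    fix U :: "complex set" assume "openin euclidean U"
    then have oU: "open U" by simp
    show "openin (lc_topology P) {x \<in> topspace (lc_topology P). e x \<in> U}"
      unfolding openin_lc
    proof
      fix x assume "x \<in> {x \<in> topspace (lc_topology P). e x \<in> U}"
      then have "e x \<in> U" by simp
      then obtain r where r: "r > 0" "ball (e x) r \<subseteq> U" using oU open_contains_ball by blast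
      have sub: "{y. \<forall>q'\<in>{q}. q' (y - x) < r / 2} \<subseteq> {x \<in> topspace (lc_topology P). e x \<in> U}"
      proof
        fix y assume "y \<in> {y. \<forall>q'\<in>{q}. q' (y - x) < r / 2}"
        then have "q (y - x) < r / 2" by simp
        then have "cmod (e (y - x)) < r" using ebound[of "y - x"] by simp
        then have "cmod (e y - e x) < r" using ediff[of y x] by simp
        then have "dist (e x) (e y) < r" by (simp add: dist_norm norm_minus_commute)
        then have "e y \<in> U" using r by auto
        then show "y \<in> {x \<in> topspace (lc_topology P). e x \<in> U}" by simp
      qed
      have fin: "finite {q}" "{q} \<subseteq> P" "r / 2 > 0" using qP r by auto
      show "\<exists>F d. finite F \<and> F \<subseteq> P \<and> d > 0 \<and> {y. \<forall>q\<in>F. q (y - x) < d} \<subseteq> {x \<in> topspace (lc_topology P). e x \<in> U}"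
        by (rule exI[of _ "{q}"], rule exI[of _ "r / 2"], intro conjI fin sub)
    qed
  qed auto
  have "e \<in> dual_space sc P" unfolding dual_space_def using eadd esc econt by blast
  moreover have "Re (e x0) > 0" unfolding e_def using lx0 x0 by simp
  ultimately show ?thesis by blast
qed

lemma sep_points:
  fixes sc :: "complex \<Rightarrow> 'x::ab_group_add \<Rightarrow> 'x" and P :: "('x \<Rightarrow> real) set"
  assumes cvs: "complex_vs sc" and sns: "\<forall>q\<in>P. seminorm_on sc q"
    and H: "Hausdorff_space (lc_topology P)" and zk: "z \<noteq> k"
  shows "\<exists>e\<in>dual_space sc P. Re (e z) > Re (e k)"
proof -
  obtain q where q: "q \<in> P" "q (k - z) \<noteq> 0" using hausdorff_sep[OF H zk] by blast
  have sn: "seminorm_on sc q" using sns q(1) by blast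
  have "q (z - k) > 0" using q(2) sn_nonneg[OF cvs sn, of "z - k"] sn_commute[OF cvs sn, of z k] by simp
  then obtain e where e: "e \<in> dual_space sc P" "Re (e (z - k)) > 0" using dual_exists[OF cvs sn q(1)] by blast
  have add: "\<forall>x y. e (x + y) = e x + e y" using e(1) unfolding dual_space_def by blast
  have "e z = e ((z - k) + k)" by simp
  also have "\<dots> = e (z - k) + e k" using add by blast
  finally have "e z = e (z - k) + e k" .
  then have "Re (e z) > Re (e k)" using e(2) by simp
  then show ?thesis using e(1) by blast
qed

lemma dual_open:
  assumes "e \<in> dual_space sc P"
  shows "openin (lc_topology P) {w. Re (e w) > b}"
proof -
  have c: "continuous_map (lc_topology P) euclidean e" using assms unfolding dual_space_def by blast
  have "open {z::complex. Re z > b}" by (rule open_halfspace_Re_gt)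
  then have "openin (lc_topology P) {x \<in> topspace (lc_topology P). e x \<in> {z. Re z > b}}"
    using openin_continuous_map_preimage[OF c, of "{z. Re z > b}"] by simp
  moreover have "{x \<in> topspace (lc_topology P). e x \<in> {z. Re z > b}} = {w. Re (e w) > b}" by simp
  ultimately show ?thesis by simp
qed

lemma dual_closed:
  assumes "e \<in> dual_space sc P"
  shows "closedin (lc_topology P) {w. Re (e w) \<ge> b}"
proof -
  have c: "continuous_map (lc_topology P) euclidean e" using assms unfolding dual_space_def by blast
  have "closed {z::complex. Re z \<ge> b}" by (rule closed_halfspace_Re_ge)
  then have "closedin (lc_topology P) {x \<in> topspace (lc_topology P). e x \<in> {z. Re z \<ge> b}}"
    using closedin_continuous_map_preimage[OF c, of "{z. Re z \<ge> b}"] by simp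
  moreover have "{x \<in> topspace (lc_topology P). e x \<in> {z. Re z \<ge> b}} = {w. Re (e w) \<ge> b}" by simp
  ultimately show ?thesis by simp
qed

lemma mult_one: assumes cvs: "complex_vs sc" shows "is_multiplier sc (\<lambda>x. 1) W"
  unfolding is_multiplier_def using cvs_one[OF cvs] cvs_zerol[OF cvs] by simp

lemma mult_compl: assumes cvs: "complex_vs sc" and m: "is_multiplier sc \<phi> W"
  shows "is_multiplier sc (\<lambda>x. 1 - \<phi> x) W"
  unfolding is_multiplier_def
proof (intro ballI)
  fix f g assume "f \<in> W" "g \<in> W"
  then have "(\<lambda>x. sc (\<phi> x) (g x) + sc (1 - \<phi> x) (f x)) \<in> W" using m unfolding is_multiplier_def by simp
  then show "(\<lambda>x. sc (1 - \<phi> x) (f x) + sc (1 - (1 - \<phi> x)) (g x)) \<in> W" by (simp add: add.commute)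
qed

lemma mult_prod: assumes cvs: "complex_vs sc" and m1: "is_multiplier sc \<phi> W" and m2: "is_multiplier sc \<psi> W"
  shows "is_multiplier sc (\<lambda>x. \<phi> x * \<psi> x) W"
  unfolding is_multiplier_def
proof (intro ballI)
  fix f g assume fg: "f \<in> W" "g \<in> W"
  then have h: "(\<lambda>x. sc (\<psi> x) (f x) + sc (1 - \<psi> x) (g x)) \<in> W" using m2 unfolding is_multiplier_def by blast
  have m1': "\<forall>f\<in>W. \<forall>g\<in>W. (\<lambda>x. sc (\<phi> x) (f x) + sc (1 - \<phi> x) (g x)) \<in> W"
    using m1 unfolding is_multiplier_def .
  have "(\<lambda>x. sc (\<phi> x) (sc (\<psi> x) (f x) + sc (1 - \<psi> x) (g x)) + sc (1 - \<phi> x) (g x)) \<in> W"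
    using m1'[rule_format, OF h fg(2)] .
  moreover have "sc (\<phi> x) (sc (\<psi> x) (f x) + sc (1 - \<psi> x) (g x)) + sc (1 - \<phi> x) (g x)
      = sc (\<phi> x * \<psi> x) (f x) + sc (1 - \<phi> x * \<psi> x) (g x)" for x
  proof -
    have "sc (\<phi> x) (sc (\<psi> x) (f x) + sc (1 - \<psi> x) (g x)) + sc (1 - \<phi> x) (g x)
       = sc (\<phi> x * \<psi> x) (f x) + (sc (\<phi> x * (1 - \<psi> x)) (g x) + sc (1 - \<phi> x) (g x))"
      using cvs_add[OF cvs] cvs_assoc[OF cvs] by (simp add: add.assoc)
    also have "sc (\<phi> x * (1 - \<psi> x)) (g x) + sc (1 - \<phi> x) (g x) = sc (\<phi> x * (1 - \<psi> x) + (1 - \<phi> x)) (g x)"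
      using cvs_addl[OF cvs] by simp
    also have "\<phi> x * (1 - \<psi> x) + (1 - \<phi> x) = 1 - \<phi> x * \<psi> x" by (simp add: algebra_simps)
    finally show ?thesis .
  qed
  ultimately show "(\<lambda>x. sc (\<phi> x * \<psi> x) (f x) + sc (1 - \<phi> x * \<psi> x) (g x)) \<in> W" by simp
qed

lemma mult_pow: assumes cvs: "complex_vs sc" and m: "is_multiplier sc \<phi> W"
  shows "is_multiplier sc (\<lambda>x. \<phi> x ^ n) W"
proof (induction n)
  case 0 then show ?case using mult_one[OF cvs] by simp
next
  case (Suc n) then show ?case using mult_prod[OF cvs m Suc] by simp
qed

lemma mult_poly: assumes cvs: "complex_vs sc" and m: "is_multiplier sc \<phi> W"
  shows "is_multiplier sc (\<lambda>x. (1 - \<phi> x ^ n) ^ k) W"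
  using mult_pow[OF cvs mult_compl[OF cvs mult_pow[OF cvs m, of n]], of k] .

lemma poly_real:
  fixes c1 c2 \<eta> :: real
  assumes c1: "0 \<le> c1" and c12: "c1 < c2" and c2: "c2 \<le> 1" and eta: "\<eta> > 0"
  shows "\<exists>n m::nat. \<forall>t::real. 0 \<le> t \<and> t \<le> 1 \<longrightarrow> 0 \<le> (1 - t^n)^m \<and> (1 - t^n)^m \<le> 1 \<and>
           (t \<le> c1 \<longrightarrow> 1 - \<eta> \<le> (1 - t^n)^m) \<and> (c2 \<le> t \<longrightarrow> (1 - t^n)^m \<le> \<eta>)"
proof -
  have c2p: "c2 > 0" using c1 c12 by simp
  define a where "a = c1 / c2"
  have a0: "0 \<le> a" and a1: "a < 1" using c1 c12 c2p by (auto simp: a_def)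
  have c1a: "c1 \<le> a"
  proof -
    have "c1 = a * c2" using c2p by (simp add: a_def)
    also have "\<dots> \<le> a * 1" using a0 c2 by (intro mult_left_mono) auto
    finally show ?thesis by simp
  qed
  define K where "K = 2 / \<eta>"
  have Kp: "K > 0" using eta by (simp add: K_def)
  obtain n0 where n0: "a ^ n0 < \<eta> / (K + 1)" using real_arch_pow_inv[of "\<eta> / (K + 1)" a] eta Kp a1 by auto
  define n where "n = Suc n0"
  have an: "a ^ n < \<eta> / (K + 1)"
  proof -
    have "a ^ n \<le> a ^ n0" unfolding n_def using a0 a1 by (simp add: mult_left_le_one_le power_le_one)
    then show ?thesis using n0 by simp
  qed
  have c2n: "c2 ^ n > 0" using c2p by simp
  define m where "m = nat \<lceil>K / c2 ^ n\<rceil>"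
  have m1: "real m \<ge> K / c2 ^ n" unfolding m_def by linarith
  have m2: "real m < K / c2 ^ n + 1" unfolding m_def
    using Kp c2n by (simp add: of_nat_nat) linarith
  have "\<forall>t::real. 0 \<le> t \<and> t \<le> 1 \<longrightarrow> 0 \<le> (1 - t^n)^m \<and> (1 - t^n)^m \<le> 1 \<and>
           (t \<le> c1 \<longrightarrow> 1 - \<eta> \<le> (1 - t^n)^m) \<and> (c2 \<le> t \<longrightarrow> (1 - t^n)^m \<le> \<eta>)"
  proof (intro allI impI conjI)
    fix t :: real assume t: "0 \<le> t \<and> t \<le> 1"
    have u0: "0 \<le> t ^ n" using t by simp
    have u1: "t ^ n \<le> 1" using t by (simp add: power_le_one)
    show "0 \<le> (1 - t^n)^m" using u1 by simp
    show "(1 - t^n)^m \<le> 1" using u0 u1 by (simp add: power_le_one)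
    {
      assume tc: "t \<le> c1"
      have un: "t ^ n \<le> c1 ^ n" using tc t by (simp add: power_mono)
      have "1 + real m * (- (t ^ n)) \<le> (1 + - (t ^ n)) ^ m"
        using u1 by (intro Bernoulli_inequality) simp
      then have B: "1 - real m * t ^ n \<le> (1 - t ^ n) ^ m" by simp
      have "real m * t ^ n \<le> real m * c1 ^ n" using un by (simp add: mult_left_mono)
      also have "\<dots> \<le> (K / c2 ^ n + 1) * c1 ^ n" using m2 c1 by (intro mult_right_mono) auto
      also have "\<dots> = K * a ^ n + c1 ^ n" using c2n by (simp add: a_def power_divide field_simps)
      also have "\<dots> \<le> K * a ^ n + a ^ n" using c1a c1 by (simp add: power_mono)
      also have "\<dots> = (K + 1) * a ^ n" by (simp add: algebra_simps)
      also have "\<dots> \<le> \<eta>" using an Kp by (simp add: field_simps)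
      finally show "1 - \<eta> \<le> (1 - t^n)^m" using B by simp
    }
    {
      assume tc: "c2 \<le> t"
      have un: "c2 ^ n \<le> t ^ n" using tc c2p by (simp add: power_mono)
      have "(1 - t ^ n) ^ m \<le> (1 - c2 ^ n) ^ m" using un u1 by (intro power_mono) auto
      also have "\<dots> \<le> exp (- (c2 ^ n)) ^ m"
      proof (rule power_mono)
        show "1 - c2 ^ n \<le> exp (- (c2 ^ n))" using exp_ge_add_one_self[of "- (c2 ^ n)"] by simp
        show "0 \<le> 1 - c2 ^ n" using c2 c2p by (simp add: power_le_one)
      qed
      also have "\<dots> = exp (real m * (- (c2 ^ n)))" using exp_of_nat_mult[of m "- (c2 ^ n)"] by simp
      also have "\<dots> \<le> exp (- K)"
      proof -
        have "K \<le> real m * c2 ^ n" using m1 c2n by (simp add: field_simps)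
        then show ?thesis by simp
      qed
      also have "\<dots> \<le> \<eta>"
      proof -
        have "1 + K \<le> exp K" by (rule exp_ge_add_one_self)
        then have "exp (- K) \<le> 1 / (1 + K)" using Kp by (simp add: exp_minus field_simps)
        also have "\<dots> \<le> 1 / K" using Kp by (simp add: field_simps)
        also have "\<dots> \<le> \<eta>" using eta by (simp add: K_def)
        finally show ?thesis .
      qed
      finally show "(1 - t^n)^m \<le> \<eta>" .
    }
  qed
  then show ?thesis by blast
qed

lemma poly_cplx_cont:
  fixes \<eta> :: real and n m :: nat
  assumes eta: "\<eta> > 0"
  shows "\<exists>\<delta>>0. \<forall>(z::complex) (t::real). 0 \<le> t \<and> t \<le> 1 \<and> cmod (z - complex_of_real t) < \<delta> \<longrightarrow>
             cmod ((1 - z^n)^m - (1 - (complex_of_real t)^n)^m) < \<eta>"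
proof -
  have "continuous_on (cball (0::complex) 2) (\<lambda>z. (1 - z^n)^m)" by (intro continuous_intros)
  then have "uniformly_continuous_on (cball (0::complex) 2) (\<lambda>z. (1 - z^n)^m)"
    by (rule compact_uniformly_continuous[OF _ compact_cball])
  then obtain d where d: "d > 0" and dd: "\<And>(x::complex) x'. x \<in> cball 0 2 \<Longrightarrow> x' \<in> cball 0 2 \<Longrightarrow> dist x' x < d \<Longrightarrow>
      dist ((1 - x'^n)^m) ((1 - x^n)^m) < \<eta>"
  proof -
    have "\<exists>d>0. \<forall>x\<in>cball (0::complex) 2. \<forall>x'\<in>cball 0 2. dist x' x < d \<longrightarrow> dist ((1 - x'^n)^m) ((1 - x^n)^m) < \<eta>"
      using \<open>uniformly_continuous_on (cball (0::complex) 2) (\<lambda>z. (1 - z^n)^m)\<close> eta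
      unfolding uniformly_continuous_on_def by blast
    then show ?thesis using that by blast
  qed
  show ?thesis
  proof (intro exI[of _ "min d 1"] conjI allI impI)
    show "min d 1 > 0" using d by simp
    fix z :: complex and t :: real assume h: "0 \<le> t \<and> t \<le> 1 \<and> cmod (z - complex_of_real t) < min d 1"
    have tb: "complex_of_real t \<in> cball 0 2" using h by (simp add: dist_norm)
    have "cmod z \<le> cmod (complex_of_real t) + cmod (z - complex_of_real t)" by (rule norm_triangle_sub)
    also have "\<dots> \<le> 2" using h by simp
    finally have zb: "z \<in> cball 0 2" by (simp add: dist_norm)
    have "dist z (complex_of_real t) < d" using h by (simp add: dist_norm)
    then show "cmod ((1 - z^n)^m - (1 - (complex_of_real t)^n)^m) < \<eta>"
      using dd[OF tb zb] by (simp add: dist_norm)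
  qed
qed

lemma poly_final:
  fixes c1 c2 \<eta> :: real
  assumes c1: "0 \<le> c1" and c12: "c1 < c2" and c2: "c2 \<le> 1" and eta: "\<eta> > 0"
  shows "\<exists>n m::nat. \<exists>\<delta>>0. \<forall>(z::complex) (t::real). 0 \<le> t \<and> t \<le> 1 \<and> cmod (z - complex_of_real t) < \<delta> \<longrightarrow>
      cmod ((1 - z^n)^m) + cmod (1 - (1 - z^n)^m) \<le> 1 + \<eta> \<and>
      (Re z < c1 \<longrightarrow> cmod (1 - (1 - z^n)^m) \<le> \<eta>) \<and> (Re z > c2 \<longrightarrow> cmod ((1 - z^n)^m) \<le> \<eta>)"
proof -
  define d0 where "d0 = (c2 - c1) / 4"
  have d0: "d0 > 0" using c12 by (simp add: d0_def)
  obtain n m :: nat where nm: "\<And>t::real. 0 \<le> t \<Longrightarrow> t \<le> 1 \<Longrightarrow> 0 \<le> (1 - t^n)^m \<and> (1 - t^n)^m \<le> 1 \<and>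
           (t \<le> c1 + d0 \<longrightarrow> 1 - \<eta>/2 \<le> (1 - t^n)^m) \<and> (c2 - d0 \<le> t \<longrightarrow> (1 - t^n)^m \<le> \<eta>/2)"
  proof -
    have p: "0 \<le> c1 + d0" "c1 + d0 < c2 - d0" "c2 - d0 \<le> 1" "\<eta>/2 > 0"
      using c1 c12 c2 eta d0 unfolding d0_def by (auto simp: field_simps)
    show ?thesis using poly_real[OF p] that by blast
  qed
  obtain \<delta>1 where \<delta>1: "\<delta>1 > 0" and cont: "\<And>(z::complex) (t::real). 0 \<le> t \<Longrightarrow> t \<le> 1 \<Longrightarrow> cmod (z - complex_of_real t) < \<delta>1 \<Longrightarrow>
             cmod ((1 - z^n)^m - (1 - (complex_of_real t)^n)^m) < \<eta>/2"
    using poly_cplx_cont[of "\<eta>/2" n m] eta by auto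
  show ?thesis
  proof (rule exI[of _ n], rule exI[of _ m], rule exI[of _ "min \<delta>1 d0"], intro conjI allI impI)
    show "min \<delta>1 d0 > 0" using \<delta>1 d0 by simp
    fix z :: complex and t :: real
    assume h: "0 \<le> t \<and> t \<le> 1 \<and> cmod (z - complex_of_real t) < min \<delta>1 d0"
    define R where "R = (1 - t^n)^m"
    define Q where "Q = (1 - z^n)^m"
    have R: "0 \<le> R" "R \<le> 1" "t \<le> c1 + d0 \<Longrightarrow> 1 - \<eta>/2 \<le> R" "c2 - d0 \<le> t \<Longrightarrow> R \<le> \<eta>/2"
      using nm[of t] h unfolding R_def by auto
    have "(1 - (complex_of_real t)^n)^m = complex_of_real R" unfolding R_def by simp
    then have QR: "cmod (Q - complex_of_real R) < \<eta>/2" using cont[of t z] h unfolding Q_def by simp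
    have Qb: "cmod Q \<le> R + \<eta>/2"
    proof -
      have "cmod Q \<le> cmod (complex_of_real R) + cmod (Q - complex_of_real R)" by (rule norm_triangle_sub)
      then show ?thesis using QR R(1) by simp
    qed
    have Q1b: "cmod (1 - Q) \<le> (1 - R) + \<eta>/2"
    proof -
      have "1 - Q = complex_of_real (1 - R) - (Q - complex_of_real R)" by simp
      then have "cmod (1 - Q) \<le> cmod (complex_of_real (1 - R)) + cmod (Q - complex_of_real R)"
        by (metis norm_triangle_ineq4)
      moreover have "cmod (complex_of_real (1 - R)) = 1 - R" using R(2) by (simp only: norm_of_real)
      ultimately show ?thesis using QR by linarith
    qed
    have ret: "\<bar>Re z - t\<bar> < d0"
    proof -
      have "\<bar>Re (z - complex_of_real t)\<bar> \<le> cmod (z - complex_of_real t)" by (rule abs_Re_le_cmod)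
      then show ?thesis using h by simp
    qed
    show "cmod ((1 - z^n)^m) + cmod (1 - (1 - z^n)^m) \<le> 1 + \<eta>" using Qb Q1b unfolding Q_def by simp
    {
      assume "Re z < c1"
      then have "t \<le> c1 + d0" using ret by simp
      then show "cmod (1 - (1 - z^n)^m) \<le> \<eta>" using R(3) Q1b unfolding Q_def by simp
    }
    {
      assume "Re z > c2"
      then have "c2 - d0 \<le> t" using ret by simp
      then show "cmod ((1 - z^n)^m) \<le> \<eta>" using R(4) Qb unfolding Q_def by simp
    }
  qed
qed

lemma zs_UNIV: "zero_set (UNIV :: 'a::topological_space set)"
  unfolding zero_set_def by (rule exI[of _ "\<lambda>x. 0"]) auto

lemma zs_Int:
  fixes A B :: "'a::topological_space set"
  assumes "zero_set A" "zero_set B" shows "zero_set (A \<inter> B)"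
proof -
  obtain h1 :: "'a \<Rightarrow> real" where h1: "continuous_on UNIV h1" "A = h1 -` {0}" using assms(1) unfolding zero_set_def by blast
  obtain h2 :: "'a \<Rightarrow> real" where h2: "continuous_on UNIV h2" "B = h2 -` {0}" using assms(2) unfolding zero_set_def by blast
  have c: "continuous_on UNIV (\<lambda>x. \<bar>h1 x\<bar> + \<bar>h2 x\<bar>)" using h1(1) h2(1) by (intro continuous_intros)
  have "A \<inter> B = (\<lambda>x. \<bar>h1 x\<bar> + \<bar>h2 x\<bar>) -` {0}" using h1(2) h2(2) by auto
  then show ?thesis unfolding zero_set_def using c by blast
qed

lemma zs_Re_le:
  fixes \<phi> :: "'a::topological_space \<Rightarrow> complex"
  assumes "continuous_on UNIV \<phi>" shows "zero_set {x. Re (\<phi> x) \<le> c}"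
proof -
  have cc: "continuous_on UNIV (\<lambda>x. max 0 (Re (\<phi> x) - c))" using assms by (intro continuous_intros)
  have "{x. Re (\<phi> x) \<le> c} = (\<lambda>x. max 0 (Re (\<phi> x) - c)) -` {0}" by auto
  then show ?thesis unfolding zero_set_def using cc by blast
qed

lemma zs_Re_ge:
  fixes \<phi> :: "'a::topological_space \<Rightarrow> complex"
  assumes "continuous_on UNIV \<phi>" shows "zero_set {x. Re (\<phi> x) \<ge> c}"
proof -
  have cc: "continuous_on UNIV (\<lambda>x. max 0 (c - Re (\<phi> x)))" using assms by (intro continuous_intros)
  have "{x. Re (\<phi> x) \<ge> c} = (\<lambda>x. max 0 (c - Re (\<phi> x))) -` {0}" by auto
  then show ?thesis unfolding zero_set_def using cc by blast
qed

lemma zf_UNIV: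
  fixes M :: "'a::topological_space set set"
  assumes "z_filter M" shows "UNIV \<in> M"
proof -
  obtain F where "F \<in> M" using assms unfolding z_filter_def by blast
  then show ?thesis using assms zs_UNIV unfolding z_filter_def by blast
qed

lemma zf_Int:
  assumes "z_filter M" "F \<in> M" "G \<in> M" shows "F \<inter> G \<in> M"
  using assms unfolding z_filter_def by blast

lemma zf_Inter:
  fixes M :: "'a::topological_space set set"
  assumes zf: "z_filter M" and fin: "finite S" and sub: "S \<subseteq> M" shows "\<Inter>S \<in> M"
  using fin sub
proof (induction S rule: finite_induct)
  case empty then show ?case using zf_UNIV[OF zf] by simp
next
  case (insert F S)
  then have "F \<in> M" "\<Inter>S \<in> M" by auto
  then show ?case using zf_Int[OF zf] by simp
qed

lemma cluster_close:
  fixes sc :: "complex \<Rightarrow> 'x::ab_group_add \<Rightarrow> 'x" and P :: "('x \<Rightarrow> real) set"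
    and h :: "'a::topological_space \<Rightarrow> 'x" and v :: "'a \<Rightarrow> real" and M :: "'a set set"
  assumes cvs: "complex_vs sc" and sns: "\<forall>q\<in>P. seminorm_on sc q" and pP: "p \<in> P"
    and H: "Hausdorff_space (lc_topology P)"
    and cpt: "compactin (lc_topology P) (lc_topology P closure_of range h)"
    and sep: "beta_separates sc P A v h"
    and anti: "antisymmetric_zf A v M" and eps: "\<epsilon> > 0"
  shows "\<exists>k. \<exists>F\<in>M. \<forall>x\<in>F \<inter> supp v. p (h x - k) < \<epsilon>"
proof -
  let ?X = "lc_topology P"
  define K where "K = ?X closure_of range h"
  have zf: "z_filter M" and meet: "\<And>F. F \<in> M \<Longrightarrow> F \<inter> supp v \<noteq> {}"
    using anti unfolding antisymmetric_zf_def by blast+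
  have sn: "seminorm_on sc p" using sns pP by blast
  have hK: "h x \<in> K" for x unfolding K_def using closure_of_subset[of "range h" ?X] by auto
  define cl where "cl F = ?X closure_of (h ` (F \<inter> supp v))" for F
  have "K \<inter> \<Inter>(cl ` M) \<noteq> {}"
  proof -
    have "compactin ?X K" using cpt K_def by simp
    moreover have "\<forall>C\<in>cl ` M. closedin ?X C" unfolding cl_def by auto
    moreover have "K \<inter> \<Inter>\<G> \<noteq> {}" if G: "finite \<G>" "\<G> \<subseteq> cl ` M" for \<G>
    proof -
      obtain S where S: "S \<subseteq> M" "finite S" "\<G> = cl ` S" using finite_subset_image[OF G] by blast
      have "\<Inter>S \<in> M" using zf_Inter[OF zf S(2) S(1)] .
      then obtain x where x: "x \<in> \<Inter>S" "x \<in> supp v" using meet by blast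
      have "h x \<in> cl F" if "F \<in> S" for F
      proof -
        have "h x \<in> h ` (F \<inter> supp v)" using x that by blast
        then show ?thesis unfolding cl_def using closure_of_subset[of "h ` (F \<inter> supp v)" ?X] by auto
      qed
      then have "h x \<in> K \<inter> \<Inter>\<G>" using hK S(3) by blast
      then show ?thesis by blast
    qed
    ultimately show ?thesis unfolding compactin_fip by blast
  qed
  then obtain k where kK: "k \<in> K" and kcl: "\<And>F. F \<in> M \<Longrightarrow> k \<in> cl F" by blast
  define C where "C = K \<inter> {w. p (w - k) \<ge> \<epsilon>}"
  have Cc: "compactin ?X C"
  proof -
    have "openin ?X {w. p (w - k) < \<epsilon>}" by (rule ball_openin[OF pP sn])
    then have "closedin ?X (UNIV - {w. p (w - k) < \<epsilon>})" using closedin_diff[of ?X UNIV] by (metis closedin_topspace topspace_lc)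
    moreover have "UNIV - {w. p (w - k) < \<epsilon>} = {w. p (w - k) \<ge> \<epsilon>}" by auto
    ultimately have "closedin ?X {w. p (w - k) \<ge> \<epsilon>}" by simp
    then have "closedin ?X C" unfolding C_def K_def by (intro closedin_Int) auto
    then show ?thesis using closed_compactin[of ?X K C] cpt unfolding C_def K_def by blast
  qed
  have cover: "\<exists>U. openin ?X U \<and> z \<in> U \<and> (\<exists>F\<in>M. \<forall>x\<in>F \<inter> supp v. h x \<notin> U)" if zC: "z \<in> C" for z
  proof -
    have "z \<noteq> k"
    proof
      assume "z = k"
      then have "p (z - k) = 0" using sn_zero[OF cvs sn] by simp
      then show False using zC eps unfolding C_def by simp
    qed
    then obtain e where e: "e \<in> dual_space sc P" "Re (e z) > Re (e k)" using sep_points[OF cvs sns H] by blast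
    define a where "a = Re (e k) + (Re (e z) - Re (e k)) / 3"
    define b where "b = Re (e k) + 2 * (Re (e z) - Re (e k)) / 3"
    have ab: "a < b" "Re (e k) < a" "b < Re (e z)" using e(2) unfolding a_def b_def by (auto simp: field_simps)
    obtain F where F: "F \<in> M" and dis: "F \<inter> {x\<in>supp v. Re (e (h x)) \<le> a} = {} \<or> F \<inter> {x\<in>supp v. Re (e (h x)) \<ge> b} = {}"
      using sep anti e(1) ab(1) unfolding beta_separates_def by blast
    have "F \<inter> {x\<in>supp v. Re (e (h x)) \<ge> b} = {}"
    proof (rule ccontr)
      assume "F \<inter> {x\<in>supp v. Re (e (h x)) \<ge> b} \<noteq> {}"
      then have d1: "F \<inter> {x\<in>supp v. Re (e (h x)) \<le> a} = {}" using dis by blast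
      have "h ` (F \<inter> supp v) \<subseteq> {w. Re (e w) \<ge> a}" using d1 by fastforce
      then have "cl F \<subseteq> {w. Re (e w) \<ge> a}" unfolding cl_def
        using closure_of_minimal dual_closed[OF e(1)] by blast
      then have "Re (e k) \<ge> a" using kcl[OF F] by blast
      then show False using ab by simp
    qed
    then have "\<forall>x\<in>F \<inter> supp v. h x \<notin> {w. Re (e w) > b}" by fastforce
    moreover have "openin ?X {w. Re (e w) > b}" by (rule dual_open[OF e(1)])
    moreover have "z \<in> {w. Re (e w) > b}" using ab by simp
    ultimately show ?thesis using F by blast
  qed
  define \<U> where "\<U> = {U. openin ?X U \<and> (\<exists>F\<in>M. \<forall>x\<in>F \<inter> supp v. h x \<notin> U)}"
  have "C \<subseteq> \<Union>\<U>" using cover unfolding \<U>_def by blast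
  moreover have "\<forall>U\<in>\<U>. openin ?X U" unfolding \<U>_def by blast
  ultimately obtain \<V> where V: "finite \<V>" "\<V> \<subseteq> \<U>" "C \<subseteq> \<Union>\<V>"
    using Cc unfolding compactin_def by meson
  have "\<forall>U\<in>\<V>. \<exists>F. F \<in> M \<and> (\<forall>x\<in>F \<inter> supp v. h x \<notin> U)" using V(2) unfolding \<U>_def by blast
  then obtain FU where FU: "\<And>U. U \<in> \<V> \<Longrightarrow> FU U \<in> M \<and> (\<forall>x\<in>FU U \<inter> supp v. h x \<notin> U)"
    by metis
  define F where "F = \<Inter>(FU ` \<V>)"
  have FM: "F \<in> M" unfolding F_def using FU V(1) by (intro zf_Inter[OF zf]) auto
  have "\<forall>x\<in>F \<inter> supp v. p (h x - k) < \<epsilon>"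
  proof
    fix x assume x: "x \<in> F \<inter> supp v"
    show "p (h x - k) < \<epsilon>"
    proof (rule ccontr)
      assume "\<not> p (h x - k) < \<epsilon>"
      then have "h x \<in> C" using hK unfolding C_def by simp
      then obtain U where U: "U \<in> \<V>" "h x \<in> U" using V(3) by blast
      have "x \<in> FU U \<inter> supp v" using x U(1) unfolding F_def by blast
      then show False using FU[OF U(1)] U(2) by blast
    qed
  qed
  then show ?thesis using FM by blast
qed

definition goodF :: "('a \<Rightarrow> real) \<Rightarrow> ('x \<Rightarrow> real) \<Rightarrow> ('a \<Rightarrow> 'x::ab_group_add) \<Rightarrow> ('a \<Rightarrow> 'x) set \<Rightarrow> real \<Rightarrow> 'a::topological_space set set \<Rightarrow> bool" where
  "goodF v p f W d M \<longleftrightarrow> z_filter M \<and> (\<forall>F\<in>M. \<forall>r<d. \<forall>g\<in>W. \<exists>x\<in>F. r < v x * p (f x - g x))"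

lemma ext_some: "Some z \<in> ext_closure S \<longleftrightarrow> z \<in> closure S"
  unfolding ext_closure_def by auto

lemma ext_none: "\<not> bounded S \<Longrightarrow> None \<in> ext_closure S"
  unfolding ext_closure_def by auto

lemma good_extend:
  fixes M :: "'a::topological_space set set"
  assumes good: "goodF v p f W d M" and Z: "zero_set Z" and d: "d > 0" and W: "W \<noteq> {}"
    and ZZ: "\<forall>F\<in>M. \<forall>r<d. \<forall>g\<in>W. \<exists>x\<in>F \<inter> Z. r < v x * p (f x - g x)"
  shows "goodF v p f W d {Y. zero_set Y \<and> (\<exists>F\<in>M. F \<inter> Z \<subseteq> Y)} \<and> M \<subseteq> {Y. zero_set Y \<and> (\<exists>F\<in>M. F \<inter> Z \<subseteq> Y)}
     \<and> Z \<in> {Y. zero_set Y \<and> (\<exists>F\<in>M. F \<inter> Z \<subseteq> Y)}"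
proof -
  define M' where "M' = {Y. zero_set Y \<and> (\<exists>F\<in>M. F \<inter> Z \<subseteq> Y)}"
  have zf: "z_filter M" using good unfolding goodF_def by blast
  have zsM: "\<And>F. F \<in> M \<Longrightarrow> zero_set F" using zf unfolding z_filter_def by blast
  have UM: "UNIV \<in> M" using zf_UNIV[OF zf] .
  have ZM': "Z \<in> M'" unfolding M'_def using Z UM by blast
  have sub: "M \<subseteq> M'" unfolding M'_def using zsM by blast
  obtain g0 where g0: "g0 \<in> W" using W by blast
  have ne: "F \<inter> Z \<noteq> {}" if "F \<in> M" for F
    using ZZ[rule_format, OF that d g0] by blast
  have zf': "z_filter M'"
    unfolding z_filter_def
  proof (intro conjI ballI allI impI)
    show "M' \<noteq> {}" using ZM' by blast
  next
    fix Y assume "Y \<in> M'" then show "zero_set Y" unfolding M'_def by blast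
  next
    show "{} \<notin> M'"
    proof
      assume "{} \<in> M'"
      then obtain F where "F \<in> M" "F \<inter> Z \<subseteq> {}" unfolding M'_def by blast
      then show False using ne by blast
    qed
  next
    fix Y1 Y2 assume Y: "Y1 \<in> M'" "Y2 \<in> M'"
    then obtain F1 F2 where F: "F1 \<in> M" "F1 \<inter> Z \<subseteq> Y1" "F2 \<in> M" "F2 \<inter> Z \<subseteq> Y2" "zero_set Y1" "zero_set Y2"
      unfolding M'_def by blast
    have "F1 \<inter> F2 \<in> M" using zf_Int[OF zf F(1) F(3)] .
    moreover have "(F1 \<inter> F2) \<inter> Z \<subseteq> Y1 \<inter> Y2" using F by blast
    moreover have "zero_set (Y1 \<inter> Y2)" using zs_Int F(5,6) by blast
    ultimately show "Y1 \<inter> Y2 \<in> M'" unfolding M'_def by blast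
  next
    fix Y Y' assume "Y \<in> M'" "zero_set Y' \<and> Y \<subseteq> Y'"
    then show "Y' \<in> M'" unfolding M'_def by blast
  qed
  have "\<forall>Y\<in>M'. \<forall>r<d. \<forall>g\<in>W. \<exists>x\<in>Y. r < v x * p (f x - g x)"
  proof (intro ballI allI impI)
    fix Y r g assume "Y \<in> M'" "r < d" "g \<in> W"
    then obtain F where "F \<in> M" "F \<inter> Z \<subseteq> Y" unfolding M'_def by blast
    then show "\<exists>x\<in>Y. r < v x * p (f x - g x)" using ZZ[rule_format, OF \<open>F \<in> M\<close> \<open>r < d\<close> \<open>g \<in> W\<close>] by blast
  qed
  then have "goodF v p f W d M'" unfolding goodF_def using zf' by blast
  then show ?thesis using sub ZM' unfolding M'_def by blast
qed

lemma ne_if_mem: "x \<in> A \<Longrightarrow> A \<noteq> {}" by blast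

lemma fip_helper:
  fixes M :: "'a::topological_space set set" and \<phi> :: "'a \<Rightarrow> complex"
  assumes zf: "z_filter M" and Fb: "Fb \<in> M" and bd: "bounded (\<phi> ` (Fb \<inter> S))"
    and Q: "closed Q" and pts: "\<forall>F\<in>M. \<exists>x\<in>F \<inter> S. \<phi> x \<in> Q"
  shows "\<exists>z\<in>Q. \<forall>F\<in>M. z \<in> closure (\<phi> ` (F \<inter> S))"
proof -
  define T where "T F = closure (\<phi> ` (F \<inter> Fb \<inter> S)) \<inter> Q" for F
  have "closure (\<phi> ` (Fb \<inter> S)) \<inter> \<Inter>(T ` M) \<noteq> {}"
  proof (rule compact_imp_fip_image)
    show "compact (closure (\<phi> ` (Fb \<inter> S)))" using bounded_closure[OF bd] by (simp add: compact_eq_bounded_closed)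
    show "closed (T F)" if "F \<in> M" for F unfolding T_def using Q by (intro closed_Int closed_closure)
    show "closure (\<phi> ` (Fb \<inter> S)) \<inter> (\<Inter>F\<in>I'. T F) \<noteq> {}" if "finite I'" "I' \<subseteq> M" for I'
    proof -
      define G where "G = \<Inter>I' \<inter> Fb"
      have "G \<in> M" unfolding G_def using zf_Int[OF zf zf_Inter[OF zf that] Fb] .
      then have "\<exists>x\<in>G \<inter> S. \<phi> x \<in> Q" using pts by (rule bspec[rotated])
      then obtain x where x0: "x \<in> G \<inter> S" "\<phi> x \<in> Q" by (rule bexE)
      have x: "x \<in> \<Inter>I'" "x \<in> Fb" "x \<in> S" using x0(1) unfolding G_def by auto
      have "\<phi> x \<in> \<phi> ` (Fb \<inter> S)" using x(2,3) by (intro imageI IntI)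
      then have "\<phi> x \<in> closure (\<phi> ` (Fb \<inter> S))" by (rule subsetD[OF closure_subset])
      moreover have "\<phi> x \<in> T F" if "F \<in> I'" for F
      proof -
        have "x \<in> F" using x(1) that by blast
        then have "\<phi> x \<in> \<phi> ` (F \<inter> Fb \<inter> S)" using x(2,3) by (intro imageI IntI)
        then have "\<phi> x \<in> closure (\<phi> ` (F \<inter> Fb \<inter> S))" by (rule subsetD[OF closure_subset])
        then show ?thesis unfolding T_def using x0(2) by (rule IntI)
      qed
      ultimately have "\<phi> x \<in> closure (\<phi> ` (Fb \<inter> S)) \<inter> (\<Inter>F\<in>I'. T F)" by blast
      then show ?thesis by (rule ne_if_mem)
    qed
  qed
  then obtain z where z: "\<And>F. F \<in> M \<Longrightarrow> z \<in> T F" by blast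
  have "z \<in> Q" using z[OF Fb] unfolding T_def by blast
  moreover have "z \<in> closure (\<phi> ` (F \<inter> S))" if "F \<in> M" for F
  proof -
    have "z \<in> closure (\<phi> ` (F \<inter> Fb \<inter> S))" using z[OF that] unfolding T_def by blast
    moreover have "\<phi> ` (F \<inter> Fb \<inter> S) \<subseteq> \<phi> ` (F \<inter> S)" by (rule image_mono) blast
    then have "closure (\<phi> ` (F \<inter> Fb \<inter> S)) \<subseteq> closure (\<phi> ` (F \<inter> S))" by (rule closure_mono)
    ultimately show ?thesis by (rule subsetD[rotated])
  qed
  ultimately show ?thesis by blast
qed

lemma zf_single_UNIV: "z_filter {UNIV :: 'a::topological_space set}"
  unfolding z_filter_def using zs_UNIV by auto

lemma good_max_exists:
  fixes v :: "'a::topological_space \<Rightarrow> real" and p :: "'x::ab_group_add \<Rightarrow> real"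
  assumes base: "\<forall>r<d. \<forall>g\<in>W. \<exists>x. r < v x * p (f x - g x)"
  shows "\<exists>M. goodF v p f W d M \<and> (\<forall>M'. goodF v p f W d M' \<and> M \<subseteq> M' \<longrightarrow> M' = M)"
proof -
  define \<A> where "\<A> = {M. goodF v p f W d M}"
  have U: "{UNIV} \<in> \<A>" unfolding \<A>_def goodF_def using zf_single_UNIV base by auto
  have ch: "\<Union>\<C> \<in> \<A>" if C: "\<C> \<noteq> {}" "subset.chain \<A> \<C>" for \<C>
  proof -
    have CA: "\<And>M. M \<in> \<C> \<Longrightarrow> goodF v p f W d M" and cc: "\<And>M N. M \<in> \<C> \<Longrightarrow> N \<in> \<C> \<Longrightarrow> M \<subseteq> N \<or> N \<subseteq> M"
      using C(2) unfolding subset_chain_def \<A>_def by blast+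
    have zfs: "\<And>M. M \<in> \<C> \<Longrightarrow> z_filter M" using CA unfolding goodF_def by blast
    have "z_filter (\<Union>\<C>)"
      unfolding z_filter_def
    proof (intro conjI ballI allI impI)
      obtain M where M: "M \<in> \<C>" using C(1) by blast
      then have "M \<noteq> {}" using zfs unfolding z_filter_def by blast
      then show "\<Union>\<C> \<noteq> {}" using M by blast
    next
      fix F assume "F \<in> \<Union>\<C>"
      then obtain M where "M \<in> \<C>" "F \<in> M" by blast
      then show "zero_set F" using zfs unfolding z_filter_def by blast
    next
      show "{} \<notin> \<Union>\<C>"
      proof
        assume "{} \<in> \<Union>\<C>"
        then obtain M where "M \<in> \<C>" "{} \<in> M" by blast
        then show False using zfs unfolding z_filter_def by blast
      qed
    next
      fix F G assume "F \<in> \<Union>\<C>" "G \<in> \<Union>\<C>"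
      then obtain M N where MN: "M \<in> \<C>" "F \<in> M" "N \<in> \<C>" "G \<in> N" by blast
      show "F \<inter> G \<in> \<Union>\<C>"
      proof (cases "M \<subseteq> N")
        case True
        then have "F \<inter> G \<in> N" using zf_Int[OF zfs[OF MN(3)]] MN by blast
        then show ?thesis using MN(3) by blast
      next
        case False
        then have "N \<subseteq> M" using cc[OF MN(1) MN(3)] by blast
        then have "F \<inter> G \<in> M" using zf_Int[OF zfs[OF MN(1)]] MN by blast
        then show ?thesis using MN(1) by blast
      qed
    next
      fix F Z assume "F \<in> \<Union>\<C>" "zero_set Z \<and> F \<subseteq> Z"
      then obtain M where "M \<in> \<C>" "F \<in> M" "zero_set Z" "F \<subseteq> Z" by blast
      then have "Z \<in> M" using zfs unfolding z_filter_def by blast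
      then show "Z \<in> \<Union>\<C>" using \<open>M \<in> \<C>\<close> by blast
    qed
    moreover have "\<forall>F\<in>\<Union>\<C>. \<forall>r<d. \<forall>g\<in>W. \<exists>x\<in>F. r < v x * p (f x - g x)"
    proof (intro ballI allI impI)
      fix F r g assume "F \<in> \<Union>\<C>" "r < d" "g \<in> W"
      then obtain M where "M \<in> \<C>" "F \<in> M" by blast
      then have "\<forall>F\<in>M. \<forall>r<d. \<forall>g\<in>W. \<exists>x\<in>F. r < v x * p (f x - g x)" using CA unfolding goodF_def by blast
      then show "\<exists>x\<in>F. r < v x * p (f x - g x)" using \<open>F \<in> M\<close> \<open>r < d\<close> \<open>g \<in> W\<close> by blast
    qed
    ultimately show ?thesis unfolding \<A>_def goodF_def by blast
  qed
  have ne: "\<A> \<noteq> {}" using U by blast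
  obtain M where "M \<in> \<A>" "\<forall>X\<in>\<A>. M \<subseteq> X \<longrightarrow> X = M"
    using subset_Zorn_nonempty[OF ne ch] by blast
  then show ?thesis unfolding \<A>_def by blast
qed

lemma arith_combine:
  fixes a b e0 e1 B r \<eta> :: real
  assumes a: "0 \<le> a" and b: "0 \<le> b" and e0: "0 \<le> e0" "e0 \<le> B" and e1: "0 \<le> e1" "e1 \<le> B"
    and r: "0 \<le> r" and eta: "0 \<le> \<eta>" and sum: "a + b \<le> 1 + \<eta>"
    and cases: "(e0 \<le> r \<and> e1 \<le> r) \<or> (e0 \<le> r \<and> b \<le> \<eta>) \<or> (e1 \<le> r \<and> a \<le> \<eta>)"
  shows "a * e0 + b * e1 \<le> r + \<eta> * (r + B)"
proof -
  have B0: "0 \<le> B" using e0 by simp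
  have etaB: "0 \<le> \<eta> * B" using eta B0 by simp
  have etar: "0 \<le> \<eta> * r" using eta r by simp
  from cases consider "e0 \<le> r" "e1 \<le> r" | "e0 \<le> r" "b \<le> \<eta>" | "e1 \<le> r" "a \<le> \<eta>" by blast
  then show ?thesis
  proof cases
    case 1
    have "a * e0 \<le> a * r" using 1 a by (simp add: mult_left_mono)
    moreover have "b * e1 \<le> b * r" using 1 b by (simp add: mult_left_mono)
    moreover have "(a + b) * r \<le> (1 + \<eta>) * r" using sum r by (simp add: mult_right_mono)
    ultimately show ?thesis using etaB by (simp add: algebra_simps)
  next
    case 2
    have "a * e0 \<le> a * r" using 2 a by (simp add: mult_left_mono)
    moreover have "a * r \<le> (1 + \<eta>) * r" using sum b r by (intro mult_right_mono) auto
    moreover have "b * e1 \<le> \<eta> * B" using 2 b e1 eta by (intro mult_mono) auto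
    ultimately show ?thesis by (simp add: algebra_simps)
  next
    case 3
    have "b * e1 \<le> b * r" using 3 b by (simp add: mult_left_mono)
    moreover have "b * r \<le> (1 + \<eta>) * r" using sum a r by (intro mult_right_mono) auto
    moreover have "a * e0 \<le> \<eta> * B" using 3 a e0 eta by (intro mult_mono) auto
    ultimately show ?thesis by (simp add: algebra_simps)
  qed
qed

lemma err_identity:
  assumes cvs: "complex_vs sc"
  shows "f - (sc c g0 + sc (1 - c) g1) = sc c (f - g0) + sc (1 - c) (f - g1)"
proof -
  have "sc c (f - g0) + sc (1 - c) (f - g1) = (sc c f + sc (1 - c) f) - (sc c g0 + sc (1 - c) g1)"
    using cvs_diff[OF cvs] by (simp add: algebra_simps)
  also have "sc c f + sc (1 - c) f = f" using cvs_addl[OF cvs, of c "1 - c" f] cvs_one[OF cvs] by simp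
  finally show ?thesis by simp
qed

lemma err_bound:
  assumes cvs: "complex_vs sc" and sn: "seminorm_on sc p"
  shows "p (sc c u + sc (1 - c) w) \<le> cmod c * p u + cmod (1 - c) * p w"
  using sn_tri[OF sn, of "sc c u" "sc (1 - c) w"] sn_scale[OF sn] by simp

lemma supp_mem: "v x \<noteq> 0 \<Longrightarrow> x \<in> supp v"
  unfolding supp_def by (rule subsetD[OF closure_subset]) simp

lemma far_closed: "closed {z::complex. \<forall>\<tau>\<in>{0..1::real}. \<delta> \<le> cmod (z - complex_of_real \<tau>)}"
proof -
  have "{z::complex. \<forall>\<tau>\<in>{0..1::real}. \<delta> \<le> cmod (z - complex_of_real \<tau>)} =
        (\<Inter>\<tau>\<in>{0..1::real}. {z. \<delta> \<le> cmod (z - complex_of_real \<tau>)})" by blast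
  moreover have "closed (\<Inter>\<tau>\<in>{0..1::real}. {z::complex. \<delta> \<le> cmod (z - complex_of_real \<tau>)})"
  proof (rule closed_INT, rule ballI)
    fix \<tau> :: real
    show "closed {z::complex. \<delta> \<le> cmod (z - complex_of_real \<tau>)}"
      by (rule closed_Collect_le) (intro continuous_intros)+
  qed
  ultimately show ?thesis by simp
qed

lemma antisym:
  fixes sc :: "complex \<Rightarrow> 'x::ab_group_add \<Rightarrow> 'x" and p :: "'x \<Rightarrow> real" and v :: "'a::topological_space \<Rightarrow> real"
    and f :: "'a \<Rightarrow> 'x" and W :: "('a \<Rightarrow> 'x) set" and A :: "('a \<Rightarrow> complex) set" and M :: "'a set set"
  assumes cvs: "complex_vs sc" and snp: "seminorm_on sc p" and vpos: "\<forall>x. v x \<ge> 0"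
    and A_cont: "\<forall>\<phi>\<in>A. continuous_on UNIV \<phi>" and A_mult: "\<forall>\<phi>\<in>A. is_multiplier sc \<phi> W"
    and d: "d > 0" and W: "W \<noteq> {}" and bdd: "\<forall>g\<in>W. \<exists>B. \<forall>x. v x * p (f x - g x) \<le> B"
    and good: "goodF v p f W d M" and max: "\<forall>M'. goodF v p f W d M' \<and> M \<subseteq> M' \<longrightarrow> M' = M"
  shows "antisymmetric_zf A v M"
proof -
  have zf: "z_filter M" using good unfolding goodF_def by blast
  have goodM: "\<forall>F\<in>M. \<forall>r<d. \<forall>g\<in>W. \<exists>x\<in>F. r < v x * p (f x - g x)" using good unfolding goodF_def by blast
  obtain g00 where g00: "g00 \<in> W" using W by blast
  have meet: "F \<inter> supp v \<noteq> {}" if F: "F \<in> M" for F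
  proof -
    obtain x where x: "x \<in> F" "0 < v x * p (f x - g00 x)" using goodM[rule_format, OF F d g00] by blast
    then have "v x \<noteq> 0" by auto
    then have "x \<in> supp v" by (rule supp_mem)
    then show ?thesis using x(1) by blast
  qed
  have phi: "\<exists>w. (\<Inter>F\<in>M. ext_closure (\<phi> ` (F \<inter> supp v))) = {w}"
    if \<phi>A: "\<phi> \<in> A" and Isub: "(\<Inter>F\<in>M. ext_closure (\<phi> ` (F \<inter> supp v))) \<subseteq> Some ` {z. Im z = 0 \<and> 0 \<le> Re z \<and> Re z \<le> 1}"
    for \<phi>
  proof (rule ccontr)
    assume nsing: "\<not> (\<exists>w. (\<Inter>F\<in>M. ext_closure (\<phi> ` (F \<inter> supp v))) = {w})"
    define I where "I = (\<Inter>F\<in>M. ext_closure (\<phi> ` (F \<inter> supp v)))"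
    have Isome: "Some z \<in> I \<longleftrightarrow> (\<forall>F\<in>M. z \<in> closure (\<phi> ` (F \<inter> supp v)))" for z
      unfolding I_def using ext_some by blast
    have Ireal: "Im z = 0 \<and> 0 \<le> Re z \<and> Re z \<le> 1" if "Some z \<in> I" for z
      using Isub that unfolding I_def by blast
    obtain Fb where Fb: "Fb \<in> M" "bounded (\<phi> ` (Fb \<inter> supp v))"
    proof (rule ccontr)
      assume "\<not> thesis"
      then have "\<forall>F\<in>M. \<not> bounded (\<phi> ` (F \<inter> supp v))" using that by blast
      then have "None \<in> I" unfolding I_def using ext_none by blast
      then show False using Isub unfolding I_def by blast
    qed
    have "\<exists>z\<in>UNIV. \<forall>F\<in>M. z \<in> closure (\<phi> ` (F \<inter> supp v))"
      using fip_helper[OF zf Fb(1) Fb(2) closed_UNIV] meet by blast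
    then obtain z1 where z1: "Some z1 \<in> I" using Isome by blast
    obtain w where w: "w \<in> I" "w \<noteq> Some z1" using nsing z1 unfolding I_def by blast
    obtain z2 where z2: "w = Some z2" using w(1) Isub unfolding I_def by blast
    have z2I: "Some z2 \<in> I" using w z2 by simp
    have z12: "z1 \<noteq> z2" using w(2) z2 by simp
    have r1: "Im z1 = 0" "0 \<le> Re z1" "Re z1 \<le> 1" using Ireal[OF z1] by auto
    have r2: "Im z2 = 0" "0 \<le> Re z2" "Re z2 \<le> 1" using Ireal[OF z2I] by auto
    have Rne: "Re z1 \<noteq> Re z2"
    proof
      assume "Re z1 = Re z2"
      then have "z1 = z2" using r1(1) r2(1) by (simp add: complex_eq_iff)
      then show False using z12 by simp
    qed
    define s where "s = min (Re z1) (Re z2)"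
    define t where "t = max (Re z1) (Re z2)"
    have st: "0 \<le> s" "s < t" "t \<le> 1" using r1 r2 Rne unfolding s_def t_def by auto
    have sI: "Some (complex_of_real s) \<in> I" and tI: "Some (complex_of_real t) \<in> I"
    proof -
      have e1: "complex_of_real (Re z1) = z1" using r1(1) by (simp add: complex_eq_iff)
      have e2: "complex_of_real (Re z2) = z2" using r2(1) by (simp add: complex_eq_iff)
      show "Some (complex_of_real s) \<in> I" unfolding s_def using e1 e2 z1 z2I by (cases "Re z1 \<le> Re z2") auto
      show "Some (complex_of_real t) \<in> I" unfolding t_def using e1 e2 z1 z2I by (cases "Re z1 \<le> Re z2") auto
    qed
    have sC: "\<And>F. F \<in> M \<Longrightarrow> complex_of_real s \<in> closure (\<phi> ` (F \<inter> supp v))" using sI Isome by blast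
    have tC: "\<And>F. F \<in> M \<Longrightarrow> complex_of_real t \<in> closure (\<phi> ` (F \<inter> supp v))" using tI Isome by blast
    define c1 where "c1 = s + (t - s) / 3"
    define c2 where "c2 = s + 2 * (t - s) / 3"
    have cc: "0 \<le> c1" "c1 < c2" "c2 \<le> 1" "s < c1" "c2 < t" using st unfolding c1_def c2_def by (auto simp: field_simps)
    have \<phi>c: "continuous_on UNIV \<phi>" using A_cont \<phi>A by blast
    define Z0 where "Z0 = {x. Re (\<phi> x) \<le> c2}"
    define Z1 where "Z1 = {x. Re (\<phi> x) \<ge> c1}"
    have zs0: "zero_set Z0" unfolding Z0_def using zs_Re_le[OF \<phi>c] .
    have zs1: "zero_set Z1" unfolding Z1_def using zs_Re_ge[OF \<phi>c] .
    have Z0M: "Z0 \<notin> M"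
    proof
      assume "Z0 \<in> M"
      then have "complex_of_real t \<in> closure (\<phi> ` (Z0 \<inter> supp v))" by (rule tC)
      moreover have "closure (\<phi> ` (Z0 \<inter> supp v)) \<subseteq> {z. Re z \<le> c2}"
        by (rule closure_minimal) (auto simp: Z0_def intro: closed_halfspace_Re_le)
      ultimately show False using cc by auto
    qed
    have Z1M: "Z1 \<notin> M"
    proof
      assume "Z1 \<in> M"
      then have "complex_of_real s \<in> closure (\<phi> ` (Z1 \<inter> supp v))" by (rule sC)
      moreover have "closure (\<phi> ` (Z1 \<inter> supp v)) \<subseteq> {z. Re z \<ge> c1}"
        by (rule closure_minimal) (auto simp: Z1_def intro: closed_halfspace_Re_ge)
      ultimately show False using cc by auto
    qed
    have fails: "\<exists>F\<in>M. \<exists>r<d. \<exists>g\<in>W. \<forall>x\<in>F \<inter> Z. v x * p (f x - g x) \<le> r"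
      if Z: "zero_set Z" "Z \<notin> M" for Z
    proof (rule ccontr)
      assume "\<not> (\<exists>F\<in>M. \<exists>r<d. \<exists>g\<in>W. \<forall>x\<in>F \<inter> Z. v x * p (f x - g x) \<le> r)"
      then have ZZ: "\<forall>F\<in>M. \<forall>r<d. \<forall>g\<in>W. \<exists>x\<in>F \<inter> Z. r < v x * p (f x - g x)"
        by (simp add: not_le)
      have "goodF v p f W d {Y. zero_set Y \<and> (\<exists>F\<in>M. F \<inter> Z \<subseteq> Y)} \<and> M \<subseteq> {Y. zero_set Y \<and> (\<exists>F\<in>M. F \<inter> Z \<subseteq> Y)}
          \<and> Z \<in> {Y. zero_set Y \<and> (\<exists>F\<in>M. F \<inter> Z \<subseteq> Y)}"
        by (rule good_extend[OF good Z(1) d W ZZ])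
      then have "Z \<in> M" using max by metis
      then show False using Z(2) by blast
    qed
    obtain F0 r0 g0 where F0: "F0 \<in> M" "r0 < d" "g0 \<in> W" "\<forall>x\<in>F0 \<inter> Z0. v x * p (f x - g0 x) \<le> r0"
      using fails[OF zs0 Z0M] by blast
    obtain F1 r1 g1 where F1: "F1 \<in> M" "r1 < d" "g1 \<in> W" "\<forall>x\<in>F1 \<inter> Z1. v x * p (f x - g1 x) \<le> r1"
      using fails[OF zs1 Z1M] by blast
    obtain B0 where B0: "\<forall>x. v x * p (f x - g0 x) \<le> B0" using bdd F0(3) by blast
    obtain B1 where B1: "\<forall>x. v x * p (f x - g1 x) \<le> B1" using bdd F1(3) by blast
    define B where "B = max 0 (max B0 B1)"
    define r where "r = max 0 (max r0 r1)"
    have rd: "0 \<le> r" "r < d" using F0(2) F1(2) d unfolding r_def by auto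
    have B: "0 \<le> B" "B0 \<le> B" "B1 \<le> B" unfolding B_def by auto
    define \<eta> where "\<eta> = (d - r) / (2 * (r + B + 1))"
    have eta: "\<eta> > 0" unfolding \<eta>_def using rd B by simp
    have etak: "\<eta> * (r + B) \<le> (d - r) / 2"
    proof -
      have "\<eta> * (r + B) \<le> \<eta> * (r + B + 1)" using eta by simp
      also have "\<dots> = (d - r) / 2" unfolding \<eta>_def using rd B by (simp add: field_simps)
      finally show ?thesis .
    qed
    obtain n m :: nat and \<delta> :: real where \<delta>: "\<delta> > 0" and pf: "\<And>(z::complex) (\<tau>::real). 0 \<le> \<tau> \<Longrightarrow> \<tau> \<le> 1 \<Longrightarrow> cmod (z - complex_of_real \<tau>) < \<delta> \<Longrightarrow>
      cmod ((1 - z^n)^m) + cmod (1 - (1 - z^n)^m) \<le> 1 + \<eta> \<and>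
      (Re z < c1 \<longrightarrow> cmod (1 - (1 - z^n)^m) \<le> \<eta>) \<and> (Re z > c2 \<longrightarrow> cmod ((1 - z^n)^m) \<le> \<eta>)"
      using poly_final[OF cc(1) cc(2) cc(3) eta] by blast
    define Far where "Far = {z::complex. \<forall>\<tau>\<in>{0..1::real}. \<delta> \<le> cmod (z - complex_of_real \<tau>)}"
    obtain F' where F': "F' \<in> M" "\<forall>x\<in>F' \<inter> supp v. \<exists>\<tau>. 0 \<le> \<tau> \<and> \<tau> \<le> 1 \<and> cmod (\<phi> x - complex_of_real \<tau>) < \<delta>"
    proof (rule ccontr)
      assume "\<not> thesis"
      then have allF: "\<forall>F\<in>M. \<exists>x\<in>F \<inter> supp v. \<phi> x \<in> Far" using that unfolding Far_def by force
      obtain z where z: "z \<in> Far" "\<forall>F\<in>M. z \<in> closure (\<phi> ` (F \<inter> supp v))"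
        using fip_helper[OF zf Fb(1) Fb(2) _ allF] far_closed unfolding Far_def by blast
      have "Some z \<in> I" using z(2) Isome by blast
      then have zr: "Im z = 0" "0 \<le> Re z" "Re z \<le> 1" using Ireal by auto
      have "\<delta> \<le> cmod (z - complex_of_real (Re z))" using z(1) zr unfolding Far_def by auto
      moreover have "z - complex_of_real (Re z) = 0" using zr(1) by (simp add: complex_eq_iff)
      ultimately show False using \<delta> by simp
    qed
    define E where "E = F0 \<inter> F1 \<inter> F'"
    have EM: "E \<in> M" unfolding E_def using zf_Int[OF zf zf_Int[OF zf F0(1) F1(1)] F'(1)] .
    define \<psi> where "\<psi> x = (1 - \<phi> x ^ n) ^ m" for x
    have m\<psi>: "is_multiplier sc \<psi> W" unfolding \<psi>_def using mult_poly[OF cvs] A_mult \<phi>A by blast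
    define g where "g x = sc (\<psi> x) (g0 x) + sc (1 - \<psi> x) (g1 x)" for x
    have gW: "g \<in> W" using m\<psi> F0(3) F1(3) unfolding is_multiplier_def g_def by blast
    define r2 where "r2 = r + (d - r) / 2"
    have r2d: "r2 < d" "0 \<le> r2" using rd unfolding r2_def by (auto simp: field_simps)
    have claim: "v x * p (f x - g x) \<le> r2" if xE: "x \<in> E" for x
    proof (cases "v x = 0")
      case True then show ?thesis using r2d by simp
    next
      case False
      have vx: "v x > 0" using False vpos by (metis less_eq_real_def)
      have xs: "x \<in> supp v" using False by (rule supp_mem)
      obtain \<tau> where \<tau>: "0 \<le> \<tau>" "\<tau> \<le> 1" "cmod (\<phi> x - complex_of_real \<tau>) < \<delta>"
        using F'(2) xE xs unfolding E_def by blast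
      note P = pf[OF \<tau>]
      define a where "a = cmod (\<psi> x)"
      define b where "b = cmod (1 - \<psi> x)"
      define e0 where "e0 = v x * p (f x - g0 x)"
      define e1 where "e1 = v x * p (f x - g1 x)"
      have pn: "p (f x - g x) \<le> a * p (f x - g0 x) + b * p (f x - g1 x)"
        unfolding g_def a_def b_def using err_identity[OF cvs] err_bound[OF cvs snp] by metis
      have "v x * p (f x - g x) \<le> v x * (a * p (f x - g0 x) + b * p (f x - g1 x))"
        using pn vx by (simp add: mult_left_mono)
      also have "\<dots> = a * e0 + b * e1" unfolding e0_def e1_def by (simp add: algebra_simps)
      also have "\<dots> \<le> r + \<eta> * (r + B)"
      proof (rule arith_combine)
        show "0 \<le> a" "0 \<le> b" unfolding a_def b_def by auto
        show "0 \<le> e0" "0 \<le> e1" unfolding e0_def e1_def using vx sn_nonneg[OF cvs snp] by auto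
        show "e0 \<le> B" unfolding e0_def using B0 B by (meson order_trans)
        show "e1 \<le> B" unfolding e1_def using B1 B by (meson order_trans)
        show "0 \<le> r" by (rule rd(1))
        show "0 \<le> \<eta>" using eta by simp
        show "a + b \<le> 1 + \<eta>" unfolding a_def b_def \<psi>_def using P by blast
        have xF0: "x \<in> F0" and xF1: "x \<in> F1" using xE unfolding E_def by auto
        have r0r: "r0 \<le> r" and r1r: "r1 \<le> r" unfolding r_def by auto
        show "(e0 \<le> r \<and> e1 \<le> r) \<or> (e0 \<le> r \<and> b \<le> \<eta>) \<or> (e1 \<le> r \<and> a \<le> \<eta>)"
        proof (cases "Re (\<phi> x) < c1")
          case True
          then have "x \<in> Z0" unfolding Z0_def using cc by auto
          then have "x \<in> F0 \<inter> Z0" using xF0 by blast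
          then have "e0 \<le> r0" unfolding e0_def using F0(4) by blast
          then have "e0 \<le> r" using r0r by linarith
          moreover have "b \<le> \<eta>" unfolding b_def \<psi>_def using P True by blast
          ultimately show ?thesis by blast
        next
          case nlow: False
          show ?thesis
          proof (cases "Re (\<phi> x) > c2")
            case True
            then have "x \<in> Z1" unfolding Z1_def using cc by auto
            then have "x \<in> F1 \<inter> Z1" using xF1 by blast
            then have "e1 \<le> r1" unfolding e1_def using F1(4) by blast
            then have "e1 \<le> r" using r1r by linarith
            moreover have "a \<le> \<eta>" unfolding a_def \<psi>_def using P True by blast
            ultimately show ?thesis by blast
          next
            case False
            then have "x \<in> Z0" "x \<in> Z1" unfolding Z0_def Z1_def using nlow by auto
            then have "x \<in> F0 \<inter> Z0" "x \<in> F1 \<inter> Z1" using xF0 xF1 by blast+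
            then have "e0 \<le> r0" "e1 \<le> r1" unfolding e0_def e1_def using F0(4) F1(4) by blast+
            then have "e0 \<le> r" "e1 \<le> r" using r0r r1r by linarith+
            then show ?thesis by blast
          qed
        qed
      qed
      also have "\<dots> \<le> r2" unfolding r2_def using etak by simp
      finally show ?thesis .
    qed
    obtain x where "x \<in> E" "r2 < v x * p (f x - g x)" using goodM[rule_format, OF EM r2d(1) gW] by blast
    then show False using claim by fastforce
  qed
  show ?thesis unfolding antisymmetric_zf_def using zf meet phi by blast
qed

lemma bspec2: "\<forall>u\<in>V. \<forall>q\<in>P. R u q \<Longrightarrow> u \<in> V \<Longrightarrow> q \<in> P \<Longrightarrow> R u q" by blast

lemma err_eq:
  assumes cvs: "complex_vs sc" and sn: "seminorm_on sc p" and v: "0 \<le> (vx::real)"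
  shows "vx * p (fx - gx) = p (sc (complex_of_real vx) fx - sc (complex_of_real vx) gx)"
proof -
  have "sc (complex_of_real vx) fx - sc (complex_of_real vx) gx = sc (complex_of_real vx) (fx - gx)"
    using cvs_diff[OF cvs] by simp
  then show ?thesis using sn_scale[OF sn, of "complex_of_real vx" "fx - gx"] v by simp
qed

lemma h_bound:
  fixes sc :: "complex \<Rightarrow> 'x::ab_group_add \<Rightarrow> 'x" and P :: "('x \<Rightarrow> real) set" and h :: "'a \<Rightarrow> 'x"
  assumes cvs: "complex_vs sc" and pP: "p \<in> P" and sn: "seminorm_on sc p"
    and cpt: "compactin (lc_topology P) (lc_topology P closure_of range h)"
  shows "\<exists>B. \<forall>x. p (h x) \<le> B"
proof -
  have "compactin euclidean (p ` (lc_topology P closure_of range h))"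
    by (rule image_compactin[OF cpt sn_cont[OF pP cvs sn]])
  then have "bounded (p ` (lc_topology P closure_of range h))" by (simp add: compact_imp_bounded)
  then obtain a where a: "\<forall>y\<in>p ` (lc_topology P closure_of range h). \<bar>y\<bar> \<le> a" unfolding bounded_real by blast
  have "p (h x) \<le> a" for x
  proof -
    have "h x \<in> lc_topology P closure_of range h" using closure_of_subset[of "range h" "lc_topology P"] by auto
    then have "\<bar>p (h x)\<bar> \<le> a" using a by blast
    then show ?thesis by simp
  qed
  then show ?thesis by blast
qed

theorem theorem3p8:
  fixes sc :: "complex \<Rightarrow> 'x::ab_group_add \<Rightarrow> 'x"
    and P :: "('x \<Rightarrow> real) set"
    and V :: "('a::topological_space \<Rightarrow> real) set"
    and A :: "('a \<Rightarrow> complex) set"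
    and W :: "('a \<Rightarrow> 'x) set"
    and p :: "'x \<Rightarrow> real" and v :: "'a \<Rightarrow> real" and f :: "'a \<Rightarrow> 'x"
  assumes cvs: "complex_vs sc"
    and seminorms: "\<forall>q\<in>P. seminorm_on sc q"
    and V_pos: "\<forall>u\<in>V. \<forall>x. u x \<ge> 0"
    and A_cont: "\<forall>\<phi>\<in>A. continuous_on UNIV \<phi>"
    and W_sub: "W \<subseteq> FVb sc P V"
    and A_mult: "\<forall>\<phi>\<in>A. is_multiplier sc \<phi> W"
    and p_in: "p \<in> P" and v_in: "v \<in> V"
    and hausdorff: "Hausdorff_space (lc_topology P)"
    and cpt: "compactin (lc_topology P) (lc_topology P closure_of range (\<lambda>x. sc (complex_of_real (v x)) (f x)))"
    and cont: "continuous_map (subtopology euclidean (supp v)) (lc_topology P) (\<lambda>x. sc (complex_of_real (v x)) (f x))"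
    and sep: "beta_separates sc P A v (\<lambda>x. sc (complex_of_real (v x)) (f x))"
  shows "dist_vp sc v p f W = 0 \<longleftrightarrow>
    (\<forall>\<epsilon>>0. \<forall>y. \<exists>g\<in>W. \<forall>x. p (sc (complex_of_real (v x)) (f x) - y) < \<epsilon> \<longrightarrow>
        p (sc (complex_of_real (v x)) (g x) - y) < 2 * \<epsilon>)"
proof -
  define h where "h x = sc (complex_of_real (v x)) (f x)" for x
  have sn: "seminorm_on sc p" using seminorms p_in by blast
  have vpos: "\<forall>x. v x \<ge> 0" using V_pos v_in by blast
  have err: "v x * p (f x - g x) = p (h x - sc (complex_of_real (v x)) (g x))" for g x
    unfolding h_def using err_eq[OF cvs sn] vpos by blast
  have errnn: "0 \<le> v x * p (f x - g x)" for g x using vpos sn_nonneg[OF cvs sn] by simp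
  show ?thesis
  proof
    assume d0: "dist_vp sc v p f W = 0"
    show "\<forall>\<epsilon>>0. \<forall>y. \<exists>g\<in>W. \<forall>x. p (sc (complex_of_real (v x)) (f x) - y) < \<epsilon> \<longrightarrow>
        p (sc (complex_of_real (v x)) (g x) - y) < 2 * \<epsilon>"
    proof (intro allI impI)
      fix \<epsilon> :: real and y assume eps: "\<epsilon> > 0"
      have "(INF g\<in>W. SUP x. ereal (v x * p (f x - g x))) < ereal \<epsilon>"
        using d0 eps unfolding dist_vp_def by simp
      then obtain g where g: "g \<in> W" "(SUP x. ereal (v x * p (f x - g x))) < ereal \<epsilon>"
        unfolding INF_less_iff by blast
      have gl: "v x * p (f x - g x) < \<epsilon>" for x
      proof -
        have "ereal (v x * p (f x - g x)) \<le> (SUP x. ereal (v x * p (f x - g x)))" by (rule SUP_upper) simp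
        then have "ereal (v x * p (f x - g x)) < ereal \<epsilon>" using g(2) by (rule le_less_trans)
        then show ?thesis by simp
      qed
      have "\<forall>x. p (h x - y) < \<epsilon> \<longrightarrow> p (sc (complex_of_real (v x)) (g x) - y) < 2 * \<epsilon>"
      proof (intro allI impI)
        fix x assume hx: "p (h x - y) < \<epsilon>"
        have "p (sc (complex_of_real (v x)) (g x) - y) \<le> p (sc (complex_of_real (v x)) (g x) - h x) + p (h x - y)"
          by (rule sn_tri_diff[OF sn])
        also have "p (sc (complex_of_real (v x)) (g x) - h x) = v x * p (f x - g x)"
          using err[of x g] sn_commute[OF cvs sn] by simp
        finally show "p (sc (complex_of_real (v x)) (g x) - y) < 2 * \<epsilon>" using gl[of x] hx by simp
      qed
      then show "\<exists>g\<in>W. \<forall>x. p (sc (complex_of_real (v x)) (f x) - y) < \<epsilon> \<longrightarrow>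
        p (sc (complex_of_real (v x)) (g x) - y) < 2 * \<epsilon>" using g(1) unfolding h_def by blast
    qed
  next
    assume LC: "\<forall>\<epsilon>>0. \<forall>y. \<exists>g\<in>W. \<forall>x. p (sc (complex_of_real (v x)) (f x) - y) < \<epsilon> \<longrightarrow>
        p (sc (complex_of_real (v x)) (g x) - y) < 2 * \<epsilon>"
    have LC': "\<exists>g\<in>W. \<forall>x. p (h x - y) < \<epsilon> \<longrightarrow> p (sc (complex_of_real (v x)) (g x) - y) < 2 * \<epsilon>"
      if "\<epsilon> > 0" for \<epsilon> y using LC that unfolding h_def by blast
    obtain g1 where g1: "g1 \<in> W" using LC'[of 1 0] by auto
    have W: "W \<noteq> {}" using g1 by blast
    have cpt': "compactin (lc_topology P) (lc_topology P closure_of range h)" using cpt unfolding h_def by simp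
    obtain Bf where Bf: "\<And>x. p (h x) \<le> Bf" using h_bound[OF cvs p_in sn cpt'] by blast
    have bdd: "\<forall>g\<in>W. \<exists>B. \<forall>x. v x * p (f x - g x) \<le> B"
    proof
      fix g assume gW: "g \<in> W"
      then have "g \<in> FVb sc P V" using W_sub by blast
      then have "\<forall>u\<in>V. \<forall>q\<in>P. bdd_above (range (\<lambda>x. u x * q (g x)))" unfolding FVb_def by simp
      then have "bdd_above (range (\<lambda>x. v x * p (g x)))" using v_in p_in by (rule bspec2)
      then obtain Bg where Bg: "\<And>x. v x * p (g x) \<le> Bg" unfolding bdd_above_def by blast
      have "v x * p (f x - g x) \<le> Bf + Bg" for x
      proof -
        have "p (f x - g x) \<le> p (f x) + p (g x)"
          using sn_tri[OF sn, of "f x" "- g x"] sn_minus[OF cvs sn, of "g x"] by simp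
        then have "v x * p (f x - g x) \<le> v x * p (f x) + v x * p (g x)"
          using vpos by (metis distrib_left mult_left_mono)
        moreover have "v x * p (f x) = p (h x)" unfolding h_def using sn_scale[OF sn] vpos by simp
        ultimately show ?thesis using Bf[of x] Bg[of x] by simp
      qed
      then show "\<exists>B. \<forall>x. v x * p (f x - g x) \<le> B" by blast
    qed
    define D where "D = dist_vp sc v p f W"
    have D0: "0 \<le> D" unfolding D_def dist_vp_def
    proof (rule INF_greatest)
      fix g assume "g \<in> W"
      have "ereal 0 \<le> ereal (v undefined * p (f undefined - g undefined))" using errnn by simp
      also have "\<dots> \<le> (SUP x. ereal (v x * p (f x - g x)))" by (rule SUP_upper) simp
      finally show "0 \<le> (SUP x. ereal (v x * p (f x - g x)))" by (simp add: zero_ereal_def)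
    qed
    show "dist_vp sc v p f W = 0"
    proof (rule ccontr)
      assume "dist_vp sc v p f W \<noteq> 0"
      then have Dpos: "D > 0" using D0 unfolding D_def by simp
      obtain B1 where B1: "\<forall>x. v x * p (f x - g1 x) \<le> B1" using bdd g1 by blast
      have "D \<le> (SUP x. ereal (v x * p (f x - g1 x)))" unfolding D_def dist_vp_def by (rule INF_lower[OF g1])
      also have "\<dots> \<le> ereal B1" using B1 by (intro SUP_least) simp
      finally have Dfin: "D \<le> ereal B1" .
      obtain d where Dd: "D = ereal d" using Dfin Dpos by (cases D) auto
      have d: "d > 0" using Dpos Dd by simp
      have base: "\<forall>r<d. \<forall>g\<in>W. \<exists>x. r < v x * p (f x - g x)"
      proof (intro allI impI ballI)
        fix r g assume r: "r < d" and gW: "g \<in> W"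
        have "ereal r < D" using r Dd by simp
        also have "D \<le> (SUP x. ereal (v x * p (f x - g x)))" unfolding D_def dist_vp_def by (rule INF_lower[OF gW])
        finally have "ereal r < (SUP x. ereal (v x * p (f x - g x)))" .
        then obtain x where "ereal r < ereal (v x * p (f x - g x))" unfolding less_SUP_iff by blast
        then show "\<exists>x. r < v x * p (f x - g x)" by auto
      qed
      obtain M where M: "goodF v p f W d M" and Mmax: "\<forall>M'. goodF v p f W d M' \<and> M \<subseteq> M' \<longrightarrow> M' = M"
        using good_max_exists[OF base] by blast
      have anti: "antisymmetric_zf A v M"
        by (rule antisym[OF cvs sn vpos A_cont A_mult d W bdd M Mmax])
      have sep': "beta_separates sc P A v h" using sep unfolding h_def by simp
      have d4: "d / 4 > 0" using d by simp
      obtain k F where F: "F \<in> M" and Fk: "\<forall>x\<in>F \<inter> supp v. p (h x - k) < d / 4"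
        using cluster_close[OF cvs seminorms p_in hausdorff cpt' sep' anti d4] by blast
      obtain g where gW: "g \<in> W" and gk: "\<forall>x. p (h x - k) < d / 4 \<longrightarrow> p (sc (complex_of_real (v x)) (g x) - k) < 2 * (d / 4)"
        using LC'[OF d4, of k] by blast
      have small: "v x * p (f x - g x) \<le> 3 * d / 4" if xF: "x \<in> F" for x
      proof (cases "v x = 0")
        case True then show ?thesis using d by simp
      next
        case False
        then have xs: "x \<in> supp v" by (rule supp_mem)
        have hk: "p (h x - k) < d / 4" using Fk xF xs by blast
        have gk': "p (sc (complex_of_real (v x)) (g x) - k) < 2 * (d / 4)" using gk hk by blast
        have "v x * p (f x - g x) = p (h x - sc (complex_of_real (v x)) (g x))" by (rule err)
        also have "\<dots> \<le> p (h x - k) + p (k - sc (complex_of_real (v x)) (g x))" by (rule sn_tri_diff[OF sn])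
        also have "p (k - sc (complex_of_real (v x)) (g x)) = p (sc (complex_of_real (v x)) (g x) - k)"
          by (rule sn_commute[OF cvs sn])
        finally show ?thesis using hk gk' by simp
      qed
      have "3 * d / 4 < d" using d by simp
      then obtain x where "x \<in> F" "3 * d / 4 < v x * p (f x - g x)"
        using M gW F unfolding goodF_def by blast
      then show False using small by fastforce
    qed
  qed
qed


end
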